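(* Let $I=\{1,\dots,\ell\}$, $J=\{\ell+1,\dots,p\}$, let $h_1,\dots,h_p\colon\mathbb R^n\times\mathbb R^m\to\overline{\mathbb R}$ and $\Gamma(x):=\{y\in\mathbb R^m\mid h_i(x,y)\le0\ (i\in I),\ h_i(x,y)=0\ (i\in J)\}$. Fix $\bar x\in\operatorname{dom}\Gamma$. Assume that $h_1,\dots,h_p$ are continuous and continuously differentiable with respect to $y$ in a neighborhood of $\{\bar x\}\times\Gamma(\bar x)$, that $h_i(x,\cdot)\colon\mathbb R^m\to\mathbb R$ is continuous for every $x\in\operatorname{dom}\Gamma$ and every $i$, and assume (A1): for each $x\in\mathbb R^n$, $h_i(x,\cdot)$ is convex for $i\in I$ and affine for $i\in J$; and (A2): $\Gamma$ is locally bounded at $\bar x$. Suppose that RCPLD holds with respect to $\operatorname{dom}\Gamma$ at each point of $\{\bar x\}\times\Gamma(\bar x)$. Then $\Gamma$ is lower semicontinuous at $\bar x$ with respect to $\operatorname{dom}\Gamma$.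
   Context: $\operatorname{dom}\Gamma:=\{x\mid\Gamma(x)\ne\emptyset\}$. $\Gamma$ is locally bounded at $\bar x$ if there are a bounded set $B$ and a neighborhood $V$ of $\bar x$ with $\Gamma(x)\subset B$ for all $x\in V$. $\Gamma$ is lower semicontinuous at $\bar x$ with respect to $\Omega$ if for each open set $O$ with $\Gamma(\bar x)\cap O\ne\emptyset$ there is a neighborhood $V$ of $\bar x$ with $\Gamma(x)\cap O\neq\emptyset$ for all $x\in V\cap\Omega$. A pair of finite families $((a^i)_{i\in I_1},(b^i)_{i\in I_2})$ is positive-linearly dependent if there are scalars $\alpha_i\ge0$, $\beta_i$, not all zero, with $\sum\alpha_ia^i+\sum\beta_ib^i=0$. For $(\bar x,\bar y)\in\operatorname{gph}\Gamma$ let $I(\bar x,\bar y):=\{i\in I\mid h_i(\bar x,\bar y)=0\}$. RCPLD holds at $(\bar x,\bar y)$ with respect to $\Omega\subset\mathbb R^n$ if there are a neighborhood $U$ of $(\bar x,\bar y)$ and an index set $S\subset J$ such that: (i) $\{\nabla_yh_i(\bar x,\bar y)\mid i\in S\}$ is a basis of the span of $\{\nabla_yh_i(\bar x,\bar y)\mid i\in J\}$; (ii) $(\nabla_yh_i(x,y))_{i\in J}$ has constant rank on $U\cap(\Omega\times\mathbb R^m)$; (iii) for each $K\subset I(\bar x,\bar y)$ such that $((\nabla_yh_i(\bar x,\bar y))_{i\in K},(\nabla_yh_i(\bar x,\bar y))_{i\in S})$ is positive-linearly dependent, the family $(\nabla_yh_i(x,y))_{i\in K\cup S}$ is linearly dependent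 for each $(x,y)\in U\cap(\Omega\times\mathbb R^m)$. *)

theory Defs
  imports "HOL-Analysis.Analysis" "HOL-Library.Extended_Real"
begin

definition Icon :: "nat \<Rightarrow> nat set" where "Icon l = {1..l}"
definition Jcon :: "nat \<Rightarrow> nat \<Rightarrow> nat set" where "Jcon l p = {l+1..p}"

definition Gam :: "(nat \<Rightarrow> 'a \<Rightarrow> 'b \<Rightarrow> ereal) \<Rightarrow> nat \<Rightarrow> nat \<Rightarrow> 'a \<Rightarrow> 'b set" where
  "Gam h l p x = {y. (\<forall>i\<in>Icon l. h i x y \<le> 0) \<and> (\<forall>i\<in>Jcon l p. h i x y = 0)}"

definition domG :: "('a \<Rightarrow> 'b set) \<Rightarrow> 'a set" where
  "domG G = {x. G x \<noteq> {}}"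

definition grad_y :: "('a \<Rightarrow> 'b::real_inner \<Rightarrow> ereal) \<Rightarrow> 'a \<Rightarrow> 'b \<Rightarrow> 'b" where
  "grad_y f x y = (SOME g. ((\<lambda>z. real_of_ereal (f x z)) has_derivative (\<lambda>v. g \<bullet> v)) (at y))"

definition ereal_convex :: "('b::real_vector \<Rightarrow> ereal) \<Rightarrow> bool" where
  "ereal_convex f = convex {(y, t::real). f y \<le> ereal t}"

definition ereal_affine :: "('b::real_inner \<Rightarrow> ereal) \<Rightarrow> bool" where
  "ereal_affine f = (\<exists>a b. \<forall>y. f y = ereal (a \<bullet> y + b))"

definition locally_bounded_at :: "('a::topological_space \<Rightarrow> 'b::metric_space set) \<Rightarrow> 'a \<Rightarrow> bool" where
  "locally_bounded_at G x0 = (\<exists>B V. bounded B \<and> open V \<and> x0 \<in> V \<and> (\<forall>x\<in>V. G x \<subseteq> B))"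

definition lsc_wrt :: "('a::topological_space \<Rightarrow> 'b::topological_space set) \<Rightarrow> 'a \<Rightarrow> 'a set \<Rightarrow> bool" where
  "lsc_wrt G x0 \<Omega> = (\<forall>Ob. open Ob \<and> G x0 \<inter> Ob \<noteq> {} \<longrightarrow>
      (\<exists>V. open V \<and> x0 \<in> V \<and> (\<forall>x\<in>V \<inter> \<Omega>. G x \<inter> Ob \<noteq> {})))"

definition pos_lin_dep :: "(nat \<Rightarrow> 'b::real_vector) \<Rightarrow> nat set \<Rightarrow> (nat \<Rightarrow> 'b) \<Rightarrow> nat set \<Rightarrow> bool" where
  "pos_lin_dep a K b S = (\<exists>\<alpha> \<beta>. (\<forall>i\<in>K. \<alpha> i \<ge> 0) \<and> ((\<exists>i\<in>K. \<alpha> i \<noteq> 0) \<or> (\<exists>i\<in>S. \<beta> i \<noteq> 0)) \<and>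
      (\<Sum>i\<in>K. \<alpha> i *\<^sub>R a i) + (\<Sum>i\<in>S. \<beta> i *\<^sub>R b i) = 0)"

definition fam_lin_dep :: "(nat \<Rightarrow> 'b::real_vector) \<Rightarrow> nat set \<Rightarrow> bool" where
  "fam_lin_dep a K = (\<exists>c. (\<exists>i\<in>K. c i \<noteq> 0) \<and> (\<Sum>i\<in>K. c i *\<^sub>R a i) = 0)"

definition fam_rank :: "(nat \<Rightarrow> 'b::euclidean_space) \<Rightarrow> nat set \<Rightarrow> nat" where
  "fam_rank a K = dim (span (a ` K))"

definition active_set :: "(nat \<Rightarrow> 'a \<Rightarrow> 'b \<Rightarrow> ereal) \<Rightarrow> nat \<Rightarrow> 'a \<Rightarrow> 'b \<Rightarrow> nat set" where
  "active_set h l x y = {i\<in>Icon l. h i x y = 0}"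

definition RCPLD :: "(nat \<Rightarrow> 'a::topological_space \<Rightarrow> 'b::euclidean_space \<Rightarrow> ereal) \<Rightarrow> nat \<Rightarrow> nat \<Rightarrow> 'a set \<Rightarrow> 'a \<Rightarrow> 'b \<Rightarrow> bool" where
  "RCPLD h l p \<Omega> x0 y0 =
    (\<exists>U S. open U \<and> (x0, y0) \<in> U \<and> S \<subseteq> Jcon l p \<and>
      \<comment> \<open>(i) basis\<close>
      \<not> fam_lin_dep (\<lambda>i. grad_y (h i) x0 y0) S \<and>
      span ((\<lambda>i. grad_y (h i) x0 y0) ` S) = span ((\<lambda>i. grad_y (h i) x0 y0) ` Jcon l p) \<and>
      \<comment> \<open>(ii) constant rank\<close>
      (\<forall>q1\<in>U \<inter> (\<Omega> \<times> UNIV). \<forall>q2\<in>U \<inter> (\<Omega> \<times> UNIV).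
         fam_rank (\<lambda>i. grad_y (h i) (fst q1) (snd q1)) (Jcon l p) =
         fam_rank (\<lambda>i. grad_y (h i) (fst q2) (snd q2)) (Jcon l p)) \<and>
      \<comment> \<open>(iii)\<close>
      (\<forall>K\<subseteq>active_set h l x0 y0.
         pos_lin_dep (\<lambda>i. grad_y (h i) x0 y0) K (\<lambda>i. grad_y (h i) x0 y0) S \<longrightarrow>
         (\<forall>(x, y)\<in>U \<inter> (\<Omega> \<times> UNIV). fam_lin_dep (\<lambda>i. grad_y (h i) x y) (K \<union> S))))"

end

theory Submission
  imports Defs
begin


lemma coord_subseq:
  fixes d :: "nat \<Rightarrow> nat \<Rightarrow> real"
  assumes "finite F" and "\<forall>k i. \<bar>d k i\<bar> \<le> B"
  shows "\<exists>\<sigma>. strict_mono \<sigma> \<and> (\<forall>i\<in>F. \<exists>L. (\<lambda>k. d (\<sigma> k) i) \<longlonglongrightarrow> L)"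
  using assms(1)
proof (induction F rule: finite_induct)
  case empty
  show ?case by (rule exI[of _ id]) (auto simp: strict_mono_def)
next
  case (insert i F)
  then obtain \<sigma> where s: "strict_mono \<sigma>" and c: "\<forall>j\<in>F. \<exists>L. (\<lambda>k. d (\<sigma> k) j) \<longlonglongrightarrow> L" by blast
  have "\<forall>n. (\<lambda>k. d (\<sigma> k) i) n \<in> cball 0 B"
  proof
    fix n
    have "\<bar>d (\<sigma> n) i\<bar> \<le> B" using assms(2) by simp
    then show "(\<lambda>k. d (\<sigma> k) i) n \<in> cball 0 B" by (simp add: dist_real_def)
  qed
  from seq_compactE[OF compact_imp_seq_compact[OF compact_cball[of "0::real" B]] this]
  obtain l \<sigma>' where s': "strict_mono \<sigma>'" and l: "((\<lambda>k. d (\<sigma> k) i) \<circ> \<sigma>') \<longlonglongrightarrow> l" by blast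
  show ?case
  proof (intro exI[of _ "\<sigma> \<circ> \<sigma>'"] conjI ballI)
    show "strict_mono (\<sigma> \<circ> \<sigma>')" by (rule strict_mono_o[OF s s'])
    fix j assume "j \<in> insert i F"
    then show "\<exists>L. (\<lambda>k. d ((\<sigma> \<circ> \<sigma>') k) j) \<longlonglongrightarrow> L"
    proof
      assume "j = i"
      have "(\<lambda>k. d ((\<sigma> \<circ> \<sigma>') k) i) \<longlonglongrightarrow> l" using l by (simp add: o_def)
      then show ?thesis using \<open>j = i\<close> by blast
    next
      assume "j \<in> F"
      then obtain L where "(\<lambda>k. d (\<sigma> k) j) \<longlonglongrightarrow> L" using c by blast
      from LIMSEQ_subseq_LIMSEQ[OF this s'] have "(\<lambda>k. d ((\<sigma> \<circ> \<sigma>') k) j) \<longlonglongrightarrow> L" by (simp add: o_def)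
      then show ?thesis by blast
    qed
  qed
qed

lemma lim_dep:
  fixes u :: "nat \<Rightarrow> nat \<Rightarrow> 'a::real_normed_vector" and c :: "nat \<Rightarrow> nat \<Rightarrow> real"
  assumes F: "finite F" and F1: "F1 \<subseteq> F"
   and u: "\<forall>i\<in>F. (\<lambda>k. u k i) \<longlonglongrightarrow> u0 i"
   and N: "\<forall>k. (\<Sum>i\<in>F. \<bar>c k i\<bar>) > 0"
   and small: "(\<lambda>k. norm (\<Sum>i\<in>F. c k i *\<^sub>R u k i) / (\<Sum>i\<in>F. \<bar>c k i\<bar>)) \<longlonglongrightarrow> 0"
   and pos: "\<forall>k. \<forall>i\<in>F1. c k i \<ge> 0"
  shows "\<exists>c0. (\<Sum>i\<in>F. \<bar>c0 i\<bar>) = 1 \<and> (\<forall>i\<in>F1. c0 i \<ge> 0) \<and> (\<Sum>i\<in>F. c0 i *\<^sub>R u0 i) = 0"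
proof -
  define Nk where "Nk k = (\<Sum>i\<in>F. \<bar>c k i\<bar>)" for k
  define d where "d k i = c k i / Nk k" for k i
  have Npos: "Nk k > 0" for k using N by (simp add: Nk_def)
  have dle: "\<bar>d k i\<bar> \<le> 1" if "i \<in> F" for k i
  proof -
    have "(\<Sum>j\<in>{i}. \<bar>c k j\<bar>) \<le> (\<Sum>j\<in>F. \<bar>c k j\<bar>)"
      by (rule sum_mono2) (use F that in auto)
    then have "\<bar>c k i\<bar> \<le> Nk k" unfolding Nk_def by simp
    moreover have "\<bar>d k i\<bar> = \<bar>c k i\<bar> / Nk k" using Npos[of k] by (simp add: d_def abs_divide)
    ultimately show ?thesis using Npos[of k] by (simp add: divide_le_eq)
  qed
  define d' where "d' k i = (if i \<in> F then d k i else 0)" for k i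
  have "\<forall>k i. \<bar>d' k i\<bar> \<le> 1" using dle by (simp add: d'_def)
  from coord_subseq[OF F this] obtain \<sigma> where
    scv: "strict_mono \<sigma> \<and> (\<forall>i\<in>F. \<exists>L. (\<lambda>k. d' (\<sigma> k) i) \<longlonglongrightarrow> L)" ..
  note s = conjunct1[OF scv] and cv = conjunct2[OF scv]
  define c0 where "c0 i = lim (\<lambda>k. d (\<sigma> k) i)" for i
  have cv0: "(\<lambda>k. d (\<sigma> k) i) \<longlonglongrightarrow> c0 i" if "i \<in> F" for i
  proof -
    from bspec[OF cv that] obtain L where "(\<lambda>k. d' (\<sigma> k) i) \<longlonglongrightarrow> L" ..
    then have L: "(\<lambda>k. d (\<sigma> k) i) \<longlonglongrightarrow> L" using that by (simp add: d'_def)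
    then have "c0 i = L" unfolding c0_def by (rule limI)
    then show ?thesis using L by simp
  qed
  have sum1: "(\<Sum>i\<in>F. \<bar>d k i\<bar>) = 1" for k
  proof -
    have "(\<Sum>i\<in>F. \<bar>d k i\<bar>) = (\<Sum>i\<in>F. \<bar>c k i\<bar> / Nk k)"
      using Npos[of k] by (intro sum.cong refl) (simp add: d_def abs_divide)
    also have "\<dots> = (\<Sum>i\<in>F. \<bar>c k i\<bar>) / Nk k" by (rule sum_divide_distrib[symmetric])
    also have "\<dots> = 1" using Npos[of k] by (simp add: Nk_def)
    finally show ?thesis .
  qed
  have "(\<lambda>k. \<Sum>i\<in>F. \<bar>d (\<sigma> k) i\<bar>) \<longlonglongrightarrow> (\<Sum>i\<in>F. \<bar>c0 i\<bar>)"
    by (intro tendsto_sum tendsto_rabs cv0)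
  then have 1: "(\<Sum>i\<in>F. \<bar>c0 i\<bar>) = 1" using sum1 by (simp add: LIMSEQ_const_iff)
  have 2: "\<forall>i\<in>F1. c0 i \<ge> 0"
  proof
    fix i assume i: "i \<in> F1"
    have "d (\<sigma> k) i \<ge> 0" for k using pos i Npos[of "\<sigma> k"] by (simp add: d_def)
    then show "c0 i \<ge> 0" using cv0[of i] i F1 by (auto intro: LIMSEQ_le_const)
  qed
  have lim1: "(\<lambda>k. \<Sum>i\<in>F. d (\<sigma> k) i *\<^sub>R u (\<sigma> k) i) \<longlonglongrightarrow> (\<Sum>i\<in>F. c0 i *\<^sub>R u0 i)"
    by (intro tendsto_sum tendsto_scaleR cv0) (use u s in \<open>auto intro: LIMSEQ_subseq_LIMSEQ[of _ _ \<sigma>, unfolded o_def]\<close>)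
  have eq: "norm (\<Sum>i\<in>F. d k i *\<^sub>R u k i) = norm (\<Sum>i\<in>F. c k i *\<^sub>R u k i) / (\<Sum>i\<in>F. \<bar>c k i\<bar>)" for k
  proof -
    have "(\<Sum>i\<in>F. d k i *\<^sub>R u k i) = (1 / Nk k) *\<^sub>R (\<Sum>i\<in>F. c k i *\<^sub>R u k i)"
      by (simp add: d_def scaleR_sum_right)
    then show ?thesis using Npos[of k] by (simp add: Nk_def)
  qed
  have "(\<lambda>k. norm (\<Sum>i\<in>F. d (\<sigma> k) i *\<^sub>R u (\<sigma> k) i)) \<longlonglongrightarrow> 0"
    unfolding eq using LIMSEQ_subseq_LIMSEQ[OF small s] by (simp add: o_def)
  then have "(\<lambda>k. \<Sum>i\<in>F. d (\<sigma> k) i *\<^sub>R u (\<sigma> k) i) \<longlonglongrightarrow> 0"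
    by (simp add: tendsto_norm_zero_iff)
  with lim1 have 3: "(\<Sum>i\<in>F. c0 i *\<^sub>R u0 i) = 0" by (rule LIMSEQ_unique)
  show ?thesis using 1 2 3 by (intro exI[of _ c0]) simp
qed



lemma carath0:
  fixes w :: "nat \<Rightarrow> 'a::real_vector"
  assumes "finite P" and S: "finite S" and disj: "P \<inter> S = {}"
    and indS: "\<not> fam_lin_dep w S"
    and cpos: "\<forall>i\<in>P. c i \<ge> 0"
  shows "\<exists>K c'. K \<subseteq> P \<and> (\<forall>i\<in>K. c' i \<ge> 0) \<and>
     (\<Sum>i\<in>P\<union>S. c i *\<^sub>R w i) = (\<Sum>i\<in>K\<union>S. c' i *\<^sub>R w i) \<and> \<not> fam_lin_dep w (K \<union> S)"
  using assms(1) disj cpos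
proof (induction "card P" arbitrary: P c rule: less_induct)
  case less
  note P = less.prems(1)
  show ?case
  proof (cases "fam_lin_dep w (P \<union> S)")
    case False
    then show ?thesis using less.prems by (intro exI[of _ P] exI[of _ c]) simp
  next
    case True
    then obtain a where anz: "\<exists>i\<in>P\<union>S. a i \<noteq> 0" and asum: "(\<Sum>i\<in>P\<union>S. a i *\<^sub>R w i) = 0"
      unfolding fam_lin_dep_def by blast
    have "\<exists>i\<in>P. a i \<noteq> 0"
    proof (rule ccontr)
      assume "\<not> (\<exists>i\<in>P. a i \<noteq> 0)"
      then have a0: "\<forall>i\<in>P. a i = 0" by simp
      have "(\<Sum>i\<in>P\<union>S. a i *\<^sub>R w i) = (\<Sum>i\<in>P. a i *\<^sub>R w i) + (\<Sum>i\<in>S. a i *\<^sub>R w i)"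
        by (rule sum.union_disjoint) (use P S less.prems(2) in auto)
      also have "(\<Sum>i\<in>P. a i *\<^sub>R w i) = 0" using a0 by simp
      finally have "(\<Sum>i\<in>S. a i *\<^sub>R w i) = 0" using asum by simp
      moreover have "\<exists>i\<in>S. a i \<noteq> 0" using anz a0 by auto
      ultimately have "fam_lin_dep w S" unfolding fam_lin_dep_def by blast
      then show False using indS by simp
    qed
    then obtain a' where a'P: "\<exists>i\<in>P. a' i > 0" and a'sum: "(\<Sum>i\<in>P\<union>S. a' i *\<^sub>R w i) = 0"
    proof -
      from \<open>\<exists>i\<in>P. a i \<noteq> 0\<close> obtain i where i: "i \<in> P" "a i \<noteq> 0" by blast
      show ?thesis
      proof (cases "a i > 0")
        case True then show ?thesis using that[of a] i asum by blast
      next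
        case False
        then have "(-a) i > 0" using i by simp
        moreover have "(\<Sum>i\<in>P\<union>S. (-a) i *\<^sub>R w i) = 0"
          using asum by (simp add: sum_negf)
        ultimately show ?thesis using that[of "-a"] i by blast
      qed
    qed
    define Q where "Q = {i\<in>P. a' i > 0}"
    have Qfin: "finite Q" and Qne: "Q \<noteq> {}" using P a'P by (auto simp: Q_def)
    define t where "t = Min ((\<lambda>i. c i / a' i) ` Q)"
    have "t \<in> (\<lambda>i. c i / a' i) ` Q" unfolding t_def using Qfin Qne by (intro Min_in) auto
    then obtain i0 where i0: "i0 \<in> Q" and t_eq: "t = c i0 / a' i0" by blast
    have tle: "t \<le> c i / a' i" if "i \<in> Q" for i unfolding t_def using Qfin that by (intro Min_le) auto
    have t0: "t \<ge> 0" using i0 less.prems(3) by (simp add: t_eq Q_def)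
    define c' where "c' i = c i - t * a' i" for i
    have c'pos: "\<forall>i\<in>P. c' i \<ge> 0"
    proof
      fix i assume iP: "i \<in> P"
      show "c' i \<ge> 0"
      proof (cases "a' i > 0")
        case True
        then have "i \<in> Q" using iP by (simp add: Q_def)
        then have "t \<le> c i / a' i" by (rule tle)
        then have "t * a' i \<le> c i" using True by (simp add: le_divide_eq)
        then show ?thesis by (simp add: c'_def)
      next
        case False
        then have "t * a' i \<le> 0" using t0 by (simp add: mult_nonneg_nonpos)
        moreover have "c i \<ge> 0" using less.prems(3) iP by blast
        ultimately show ?thesis by (simp add: c'_def)
      qed
    qed
    have i0P: "i0 \<in> P" and ai0: "a' i0 > 0" using i0 by (auto simp: Q_def)
    have c'i0: "c' i0 = 0" using ai0 by (simp add: c'_def t_eq)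
    have sumeq: "(\<Sum>i\<in>P\<union>S. c i *\<^sub>R w i) = (\<Sum>i\<in>P\<union>S. c' i *\<^sub>R w i)"
    proof -
      have "(\<Sum>i\<in>P\<union>S. c' i *\<^sub>R w i) = (\<Sum>i\<in>P\<union>S. c i *\<^sub>R w i - t *\<^sub>R (a' i *\<^sub>R w i))"
        by (intro sum.cong refl) (simp add: c'_def algebra_simps)
      also have "\<dots> = (\<Sum>i\<in>P\<union>S. c i *\<^sub>R w i) - t *\<^sub>R (\<Sum>i\<in>P\<union>S. a' i *\<^sub>R w i)"
        by (simp add: sum_subtractf scaleR_sum_right)
      also have "\<dots> = (\<Sum>i\<in>P\<union>S. c i *\<^sub>R w i)" using a'sum by simp
      finally show ?thesis by simp
    qed
    define P' where "P' = P - {i0}"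
    have P'fin: "finite P'" using P by (simp add: P'_def)
    have cardlt: "card P' < card P" using P i0P unfolding P'_def by (rule card_Diff1_less)
    have "P \<union> S = insert i0 (P' \<union> S)" using i0P by (auto simp: P'_def)
    then have "(\<Sum>i\<in>P\<union>S. c' i *\<^sub>R w i) = (\<Sum>i\<in>insert i0 (P'\<union>S). c' i *\<^sub>R w i)" by simp
    also have "\<dots> = c' i0 *\<^sub>R w i0 + (\<Sum>i\<in>P'\<union>S. c' i *\<^sub>R w i)"
      by (rule sum.insert) (use P'fin S i0P less.prems(2) in \<open>auto simp: P'_def\<close>)
    also have "\<dots> = (\<Sum>i\<in>P'\<union>S. c' i *\<^sub>R w i)" using c'i0 by simp
    finally have sumeq2: "(\<Sum>i\<in>P\<union>S. c i *\<^sub>R w i) = (\<Sum>i\<in>P'\<union>S. c' i *\<^sub>R w i)" using sumeq by simp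
    have d1: "P' \<inter> S = {}" using less.prems(2) by (auto simp: P'_def)
    have d2: "\<forall>i\<in>P'. c' i \<ge> 0" using c'pos by (auto simp: P'_def)
    from less.hyps[of P' c', OF cardlt P'fin d1 d2] obtain K c'' where "K \<subseteq> P'" "\<forall>i\<in>K. c'' i \<ge> 0"
      "(\<Sum>i\<in>P'\<union>S. c' i *\<^sub>R w i) = (\<Sum>i\<in>K\<union>S. c'' i *\<^sub>R w i)" "\<not> fam_lin_dep w (K \<union> S)"
      by blast
    then show ?thesis using sumeq2 by (intro exI[of _ K] exI[of _ c'']) (auto simp: P'_def)
  qed
qed

lemma span_fam:
  fixes w :: "nat \<Rightarrow> 'a::real_vector"
  assumes "finite S" and "z \<in> span (w ` S)"
  shows "\<exists>\<beta>. z = (\<Sum>i\<in>S. \<beta> i *\<^sub>R w i)"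
proof -
  let ?T = "{y. \<exists>\<beta>. y = (\<Sum>i\<in>S. \<beta> i *\<^sub>R w i)}"
  have "subspace ?T"
    unfolding subspace_def
  proof (intro conjI ballI allI)
    show "0 \<in> ?T" by (intro CollectI exI[of _ "\<lambda>_. 0"]) simp
    fix x y assume "x \<in> ?T" "y \<in> ?T"
    then obtain a b where "x = (\<Sum>i\<in>S. a i *\<^sub>R w i)" "y = (\<Sum>i\<in>S. b i *\<^sub>R w i)" by blast
    then show "x + y \<in> ?T"
      by (intro CollectI exI[of _ "\<lambda>i. a i + b i"]) (simp add: scaleR_add_left sum.distrib)
  next
    fix r :: real and x assume "x \<in> ?T"
    then obtain a where "x = (\<Sum>i\<in>S. a i *\<^sub>R w i)" by blast
    then show "r *\<^sub>R x \<in> ?T"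
      by (intro CollectI exI[of _ "\<lambda>i. r * a i"]) (simp add: scaleR_sum_right)
  qed
  moreover have "w ` S \<subseteq> ?T"
  proof
    fix y assume "y \<in> w ` S"
    then obtain j where j: "j \<in> S" "y = w j" by blast
    have "(\<Sum>i\<in>S. (if i = j then 1 else 0) *\<^sub>R w i) = (\<Sum>i\<in>S. if i = j then w i else 0)"
      by (intro sum.cong refl) simp
    also have "\<dots> = w j" using j(1) assms(1) by (simp add: sum.delta)
    finally show "y \<in> ?T" using j(2) by (intro CollectI exI[of _ "\<lambda>i. if i = j then 1 else 0"]) simp
  qed
  ultimately have "span (w ` S) \<subseteq> ?T" by (rule span_minimal[rotated])
  then show ?thesis using assms(2) by blast
qed

lemma carath:
  fixes w :: "nat \<Rightarrow> 'a::real_vector"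
  assumes P: "finite P" and S: "finite S" and disj: "P \<inter> S = {}"
    and indS: "\<not> fam_lin_dep w S"
    and mu: "\<forall>i\<in>P. \<mu> i \<ge> 0"
    and z: "z \<in> span (w ` S)"
  shows "\<exists>K c. K \<subseteq> P \<and> (\<forall>i\<in>K. c i \<ge> 0) \<and> (\<Sum>i\<in>P. \<mu> i *\<^sub>R w i) + z = (\<Sum>i\<in>K\<union>S. c i *\<^sub>R w i) \<and> \<not> fam_lin_dep w (K \<union> S)"
proof -
  obtain \<beta> where zb: "z = (\<Sum>i\<in>S. \<beta> i *\<^sub>R w i)" using span_fam[OF S z] by blast
  define c where "c i = (if i \<in> P then \<mu> i else \<beta> i)" for i
  have "(\<Sum>i\<in>P\<union>S. c i *\<^sub>R w i) = (\<Sum>i\<in>P. c i *\<^sub>R w i) + (\<Sum>i\<in>S. c i *\<^sub>R w i)"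
    by (rule sum.union_disjoint) (use P S disj in auto)
  also have "(\<Sum>i\<in>P. c i *\<^sub>R w i) = (\<Sum>i\<in>P. \<mu> i *\<^sub>R w i)" by (intro sum.cong refl) (simp add: c_def)
  also have "(\<Sum>i\<in>S. c i *\<^sub>R w i) = z" unfolding zb using disj by (intro sum.cong refl) (auto simp: c_def)
  finally have eq: "(\<Sum>i\<in>P\<union>S. c i *\<^sub>R w i) = (\<Sum>i\<in>P. \<mu> i *\<^sub>R w i) + z" .
  have "\<forall>i\<in>P. c i \<ge> 0" using mu by (simp add: c_def)
  from carath0[OF P S disj indS this] obtain K c' where
    "K \<subseteq> P" "\<forall>i\<in>K. c' i \<ge> 0" "(\<Sum>i\<in>P\<union>S. c i *\<^sub>R w i) = (\<Sum>i\<in>K\<union>S. c' i *\<^sub>R w i)"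
    "\<not> fam_lin_dep w (K \<union> S)" by blast
  then show ?thesis using eq by (intro exI[of _ K] exI[of _ c']) simp
qed



lemma lin_rep:
  fixes D :: "'a::euclidean_space \<Rightarrow> real"
  assumes "linear D"
  shows "D v = (\<Sum>b\<in>Basis. D b *\<^sub>R b) \<bullet> v"
proof -
  have "D v = D v \<bullet> 1" by simp
  also have "\<dots> = (\<Sum>i\<in>Basis. (v \<bullet> i) * (D i \<bullet> 1))" by (rule Linear_Algebra.linear_componentwise[OF assms])
  also have "\<dots> = (\<Sum>i\<in>Basis. D i * (v \<bullet> i))" by (simp add: mult.commute)
  also have "\<dots> = (\<Sum>b\<in>Basis. D b * (b \<bullet> v))" by (simp add: inner_commute)
  also have "\<dots> = (\<Sum>b\<in>Basis. D b *\<^sub>R b) \<bullet> v" by (simp add: inner_sum_left)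
  finally show ?thesis .
qed

lemma grad_exists:
  fixes g :: "'a::euclidean_space \<Rightarrow> real"
  assumes "g differentiable (at y)"
  shows "\<exists>G. (g has_derivative (\<lambda>v. G \<bullet> v)) (at y)"
proof -
  from assms obtain D where D: "(g has_derivative D) (at y)" unfolding differentiable_def by blast
  then have "linear D" by (rule has_derivative_linear)
  then have "D = (\<lambda>v. (\<Sum>b\<in>Basis. D b *\<^sub>R b) \<bullet> v)" using lin_rep by blast
  then show ?thesis using D by metis
qed

lemma grad_y_works:
  fixes f :: "'x \<Rightarrow> 'a::euclidean_space \<Rightarrow> ereal"
  assumes "(\<lambda>z. real_of_ereal (f x z)) differentiable (at y)"
  shows "((\<lambda>z. real_of_ereal (f x z)) has_derivative (\<lambda>v. grad_y f x y \<bullet> v)) (at y)"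
  unfolding grad_y_def by (rule someI_ex[OF grad_exists[OF assms]])

lemma grad_unique:
  fixes g :: "'a::euclidean_space \<Rightarrow> real"
  assumes "(g has_derivative (\<lambda>v. G1 \<bullet> v)) (at y)" "(g has_derivative (\<lambda>v. G2 \<bullet> v)) (at y)"
  shows "G1 = G2"
proof -
  have "(\<lambda>v. G1 \<bullet> v) = (\<lambda>v. G2 \<bullet> v)" by (rule has_derivative_unique[OF assms])
  then have "G1 \<bullet> (G1 - G2) = G2 \<bullet> (G1 - G2)" by metis
  then have "(G1 - G2) \<bullet> (G1 - G2) = 0" by (simp add: inner_diff_left inner_commute)
  then show ?thesis by simp
qed

lemma grad_y_eq:
  fixes f :: "'x \<Rightarrow> 'a::euclidean_space \<Rightarrow> ereal"
  assumes "((\<lambda>z. real_of_ereal (f x z)) has_derivative (\<lambda>v. G \<bullet> v)) (at y)"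
  shows "grad_y f x y = G"
proof -
  have "(\<lambda>z. real_of_ereal (f x z)) differentiable (at y)" using assms unfolding differentiable_def by blast
  from grad_unique[OF grad_y_works[of f x y, OF this] assms] show ?thesis .
qed

lemma convex_grad_ineq:
  fixes f :: "'a::euclidean_space \<Rightarrow> real"
  assumes cv: "convex_on UNIV f" and d: "(f has_derivative (\<lambda>v. G \<bullet> v)) (at y)"
  shows "f z \<ge> f y + G \<bullet> (z - y)"
proof -
  define \<psi> where "\<psi> = (\<lambda>t::real. f (y + t *\<^sub>R (z - y)))"
  have cvpsi: "convex_on UNIV \<psi>"
  proof (rule convex_onI)
    fix t s1 s2 :: real assume t: "t > 0" "t < 1"
    have "y + ((1 - t) * s1 + t * s2) *\<^sub>R (z - y) = (1 - t) *\<^sub>R (y + s1 *\<^sub>R (z - y)) + t *\<^sub>R (y + s2 *\<^sub>R (z - y))"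
      by (simp add: algebra_simps)
    moreover have "f ((1 - t) *\<^sub>R (y + s1 *\<^sub>R (z - y)) + t *\<^sub>R (y + s2 *\<^sub>R (z - y))) \<le> (1 - t) * f (y + s1 *\<^sub>R (z - y)) + t * f (y + s2 *\<^sub>R (z - y))"
      using t by (intro convex_onD[OF cv]) auto
    ultimately show "\<psi> ((1 - t) *\<^sub>R s1 + t *\<^sub>R s2) \<le> (1 - t) * \<psi> s1 + t * \<psi> s2"
      by (simp add: \<psi>_def)
  qed simp
  have line: "((\<lambda>t. y + t *\<^sub>R (z - y)) has_derivative (\<lambda>t. t *\<^sub>R (z - y))) (at 0)"
    by (auto intro!: derivative_eq_intros)
  have d': "(f has_derivative (\<lambda>v. G \<bullet> v)) (at (y + 0 *\<^sub>R (z - y)))" using d by simp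
  have "((\<lambda>t. f (y + t *\<^sub>R (z - y))) has_derivative (\<lambda>t. G \<bullet> (t *\<^sub>R (z - y)))) (at 0)"
    using has_derivative_compose[OF line d'] by simp
  then have "(\<psi> has_derivative (\<lambda>t. t * (G \<bullet> (z - y)))) (at 0)"
    by (simp add: \<psi>_def)
  moreover have "(\<lambda>t. t * (G \<bullet> (z - y))) = (*) (G \<bullet> (z - y))" by (rule ext) (rule mult.commute)
  ultimately have "(\<psi> has_field_derivative (G \<bullet> (z - y))) (at 0 within UNIV)"
    by (simp add: has_field_derivative_def)
  from convex_on_imp_above_tangent[OF cvpsi _ _ _ this, of 1] have "\<psi> 1 - \<psi> 0 \<ge> (G \<bullet> (z - y)) * (1 - 0)"
    by simp
  then show ?thesis by (simp add: \<psi>_def)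
qed

definition phiv :: "nat \<Rightarrow> (nat \<Rightarrow> 'b \<Rightarrow> real) \<Rightarrow> nat \<Rightarrow> 'b \<Rightarrow> real" where
  "phiv l f c y = (if c \<le> l then f c y else \<bar>f c y\<bar>)"

definition Fm :: "nat \<Rightarrow> nat \<Rightarrow> (nat \<Rightarrow> 'b \<Rightarrow> real) \<Rightarrow> 'b \<Rightarrow> real" where
  "Fm l p f y = Max (insert 0 ((\<lambda>c. phiv l f c y) ` {1..p}))"

lemma Fm_ge: "c \<in> {1..p} \<Longrightarrow> phiv l f c y \<le> Fm l p f y"
  unfolding Fm_def by (intro Max_ge) auto

lemma Fm_nonneg: "0 \<le> Fm l p f y"
  unfolding Fm_def by (intro Max_ge) auto

lemma Fm_cases: "Fm l p f y = 0 \<or> (\<exists>c\<in>{1..p}. Fm l p f y = phiv l f c y)"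
proof -
  have "Fm l p f y \<in> insert 0 ((\<lambda>c. phiv l f c y) ` {1..p})"
    unfolding Fm_def by (intro Max_in) auto
  then show ?thesis by auto
qed

lemma Fm_less_iff: "Fm l p f y < m \<longleftrightarrow> 0 < m \<and> (\<forall>c\<in>{1..p}. phiv l f c y < m)"
  unfolding Fm_def by (subst Max_less_iff) auto

lemma Fm_le_iff: "Fm l p f y \<le> m \<longleftrightarrow> 0 \<le> m \<and> (\<forall>c\<in>{1..p}. phiv l f c y \<le> m)"
  unfolding Fm_def by (subst Max_le_iff) auto

lemma phiv_ge: "f c y \<le> phiv l f c y" "c > l \<Longrightarrow> \<bar>f c y\<bar> \<le> phiv l f c y"
  by (auto simp: phiv_def)

lemma continuous_on_Max_insert0:
  fixes g :: "nat \<Rightarrow> 'b::topological_space \<Rightarrow> real"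
  assumes "finite C" and "\<forall>c\<in>C. continuous_on S (g c)"
  shows "continuous_on S (\<lambda>y. Max (insert 0 ((\<lambda>c. g c y) ` C)))"
  using assms
proof (induction C rule: finite_induct)
  case empty
  then show ?case by simp
next
  case (insert c C)
  have eq: "(\<lambda>y. Max (insert 0 ((\<lambda>c. g c y) ` insert c C))) = (\<lambda>y. max (g c y) (Max (insert 0 ((\<lambda>c. g c y) ` C))))"
  proof
    fix y
    have "insert 0 ((\<lambda>c. g c y) ` insert c C) = insert (g c y) (insert 0 ((\<lambda>c. g c y) ` C))" by auto
    then show "Max (insert 0 ((\<lambda>c. g c y) ` insert c C)) = max (g c y) (Max (insert 0 ((\<lambda>c. g c y) ` C)))"
      using insert.hyps(1) by (simp add: Max_insert)
  qed
  show ?case unfolding eq using insert by (intro continuous_on_max) auto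
qed

lemma Fm_continuous:
  assumes "\<forall>c\<in>{1..p}. continuous_on S (f c)"
  shows "continuous_on S (Fm l p f)"
proof -
  have "\<forall>c\<in>{1..p}. continuous_on S (\<lambda>y. phiv l f c y)"
  proof
    fix c assume "c \<in> {1..p}"
    then have "continuous_on S (f c)" using assms by blast
    then show "continuous_on S (\<lambda>y. phiv l f c y)" unfolding phiv_def
      by (cases "c \<le> l") (auto intro: continuous_on_rabs)
  qed
  from continuous_on_Max_insert0[OF _ this] show ?thesis unfolding Fm_def[abs_def] by simp
qed

lemma Fm_convex:
  fixes f :: "nat \<Rightarrow> 'b::real_inner \<Rightarrow> real"
  assumes cv: "\<forall>c\<in>{1..p}. c \<le> l \<longrightarrow> convex_on UNIV (f c)"
    and aff: "\<forall>c\<in>{1..p}. l < c \<longrightarrow> (\<exists>a b. \<forall>y. f c y = a \<bullet> y + b)"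
  shows "convex_on UNIV (Fm l p f)"
proof (rule convex_onI)
  fix t :: real and x y :: 'b assume t: "t > 0" "t < 1"
  let ?z = "(1 - t) *\<^sub>R x + t *\<^sub>R y"
  have Fx: "0 \<le> Fm l p f x" "0 \<le> Fm l p f y" by (rule Fm_nonneg)+
  have phic: "phiv l f c ?z \<le> (1 - t) * Fm l p f x + t * Fm l p f y" if c: "c \<in> {1..p}" for c
  proof -
    have "phiv l f c ?z \<le> (1 - t) * phiv l f c x + t * phiv l f c y"
    proof (cases "c \<le> l")
      case True
      then have "convex_on UNIV (f c)" using cv c by blast
      then have "f c ?z \<le> (1 - t) * f c x + t * f c y" using t by (intro convex_onD) auto
      then show ?thesis using True by (simp add: phiv_def)
    next
      case False
      then obtain a b where ab: "\<forall>y. f c y = a \<bullet> y + b" using aff c by force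
      have "f c ?z = (1 - t) * f c x + t * f c y" using ab by (simp add: inner_add_right algebra_simps)
      then have "\<bar>f c ?z\<bar> \<le> (1 - t) * \<bar>f c x\<bar> + t * \<bar>f c y\<bar>"
        using t by (simp add: abs_triangle_ineq[THEN order_trans] abs_mult)
      then show ?thesis using False by (simp add: phiv_def)
    qed
    also have "\<dots> \<le> (1 - t) * Fm l p f x + t * Fm l p f y"
      using t Fm_ge[OF c, of l f x] Fm_ge[OF c, of l f y]
      by (intro add_mono mult_left_mono) auto
    finally show ?thesis .
  qed
  have "0 \<le> (1 - t) * Fm l p f x + t * Fm l p f y" using t Fx by simp
  then show "Fm l p f ?z \<le> (1 - t) * Fm l p f x + t * Fm l p f y"
    using phic by (subst Fm_le_iff) auto
qed simp



lemma hull_coeffs: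
  fixes V :: "nat \<Rightarrow> 'a::real_vector"
  assumes C: "finite C" and h: "z \<in> convex hull (V ` C)"
  shows "\<exists>lam. (\<forall>c\<in>C. lam c \<ge> 0) \<and> sum lam C = 1 \<and> (\<Sum>c\<in>C. lam c *\<^sub>R V c) = z"
proof -
  let ?H = "{y. \<exists>lam. (\<forall>c\<in>C. lam c \<ge> 0) \<and> sum lam C = 1 \<and> (\<Sum>c\<in>C. lam c *\<^sub>R V c) = y}"
  have "convex ?H"
    unfolding convex_def
  proof (intro ballI allI impI)
    fix x y and u v :: real assume "x \<in> ?H" "y \<in> ?H" and uv: "0 \<le> u" "0 \<le> v" "u + v = 1"
    then obtain a b where a: "\<forall>c\<in>C. a c \<ge> 0" "sum a C = 1" "(\<Sum>c\<in>C. a c *\<^sub>R V c) = x"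
      and b: "\<forall>c\<in>C. b c \<ge> 0" "sum b C = 1" "(\<Sum>c\<in>C. b c *\<^sub>R V c) = y" by blast
    have "\<forall>c\<in>C. u * a c + v * b c \<ge> 0" using a b uv by simp
    moreover have "(\<Sum>c\<in>C. u * a c + v * b c) = 1"
      using a b uv by (simp add: sum.distrib flip: sum_distrib_left)
    moreover have "(\<Sum>c\<in>C. (u * a c + v * b c) *\<^sub>R V c) = u *\<^sub>R x + v *\<^sub>R y"
    proof -
      have "(\<Sum>c\<in>C. (u * a c + v * b c) *\<^sub>R V c) = (\<Sum>c\<in>C. u *\<^sub>R (a c *\<^sub>R V c) + v *\<^sub>R (b c *\<^sub>R V c))"
        by (intro sum.cong refl) (simp add: scaleR_add_left)
      also have "\<dots> = u *\<^sub>R (\<Sum>c\<in>C. a c *\<^sub>R V c) + v *\<^sub>R (\<Sum>c\<in>C. b c *\<^sub>R V c)"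
        by (simp only: sum.distrib scaleR_sum_right)
      also have "\<dots> = u *\<^sub>R x + v *\<^sub>R y" by (simp only: a(3) b(3))
      finally show ?thesis .
    qed
    ultimately show "u *\<^sub>R x + v *\<^sub>R y \<in> ?H" by (intro CollectI exI[of _ "\<lambda>c. u * a c + v * b c"] conjI)
  qed
  moreover have "V ` C \<subseteq> ?H"
  proof
    fix y assume "y \<in> V ` C"
    then obtain j where j: "j \<in> C" "y = V j" by blast
    have "(\<Sum>i\<in>C. (if i = j then 1 else 0) *\<^sub>R V i) = (\<Sum>i\<in>C. if i = j then V i else 0)"
      by (intro sum.cong refl) simp
    also have "\<dots> = V j" using j(1) C by (simp add: sum.delta)
    finally have s1: "(\<Sum>i\<in>C. (if i = j then 1 else 0) *\<^sub>R V i) = y" using j(2) by simp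
    have s2: "(\<Sum>i\<in>C. (if i = j then 1 else (0::real))) = 1" using j(1) C by (simp add: sum.delta)
    show "y \<in> ?H" using s1 s2 by (intro CollectI exI[of _ "\<lambda>i. if i = j then 1 else 0"]) simp
  qed
  ultimately have "convex hull (V ` C) \<subseteq> ?H" by (intro hull_minimal)
  then have "z \<in> ?H" using h by (rule subsetD)
  then show ?thesis by (rule CollectD)
qed

lemma affine_grad:
  fixes g :: "'a::euclidean_space \<Rightarrow> real"
  assumes "\<forall>y. g y = a \<bullet> y + b" and "(g has_derivative (\<lambda>v. G \<bullet> v)) (at y)"
  shows "G = a"
proof -
  have "g = (\<lambda>y. a \<bullet> y + b)" using assms(1) by (simp add: fun_eq_iff)
  then have "(g has_derivative (\<lambda>v. a \<bullet> v)) (at y)" by (auto intro!: derivative_eq_intros)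
  from grad_unique[OF assms(2) this] show ?thesis .
qed

lemma phiv_continuous:
  assumes "continuous_on S (f c)"
  shows "continuous_on S (\<lambda>y. phiv l f c y)"
  using assms unfolding phiv_def by (cases "c \<le> l") (auto intro: continuous_on_rabs)

lemma line_deriv:
  fixes g :: "'a::euclidean_space \<Rightarrow> real"
  assumes d: "(g has_derivative (\<lambda>v. G \<bullet> v)) (at y)"
  shows "((\<lambda>t. g (y + t *\<^sub>R d)) has_real_derivative (G \<bullet> d)) (at 0)"
proof -
  have line: "((\<lambda>t. y + t *\<^sub>R d) has_derivative (\<lambda>t. t *\<^sub>R d)) (at 0)"
    by (auto intro!: derivative_eq_intros)
  have d': "(g has_derivative (\<lambda>v. G \<bullet> v)) (at (y + 0 *\<^sub>R d))" using d by simp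
  have "((\<lambda>t. g (y + t *\<^sub>R d)) has_derivative (\<lambda>t. G \<bullet> (t *\<^sub>R d))) (at 0)"
    using has_derivative_compose[OF line d'] by simp
  moreover have "(\<lambda>t. G \<bullet> (t *\<^sub>R d)) = (*) (G \<bullet> d)" by (rule ext) simp
  ultimately show ?thesis by (simp add: has_field_derivative_def)
qed

lemma ev_right: "(\<exists>b>0. \<forall>t. 0 < t \<and> t < b \<longrightarrow> P t) \<Longrightarrow> eventually P (at_right (0::real))"
  unfolding eventually_at_right_field by auto

lemma descent:
  fixes f :: "nat \<Rightarrow> 'b::euclidean_space \<Rightarrow> real" and gr :: "nat \<Rightarrow> 'b \<Rightarrow> 'b"
  assumes aff: "\<forall>c\<in>{1..p}. l < c \<longrightarrow> (\<exists>a b. \<forall>y. f c y = a \<bullet> y + b)"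
    and cont: "\<forall>c\<in>{1..p}. continuous_on UNIV (f c)"
    and der: "\<forall>c\<in>{1..p}. (f c has_derivative (\<lambda>v. gr c ys \<bullet> v)) (at ys)"
    and ys: "dist yb ys \<le> r" and mpos: "0 < Fm l p f ys"
    and d0: "(ys - yb) \<bullet> d < 0"
    and dT: "\<forall>c\<in>{1..p}. phiv l f c ys = Fm l p f ys \<longrightarrow> ((if c \<le> l then 1 else sgn (f c ys)) *\<^sub>R gr c ys) \<bullet> d < 0"
  shows "\<exists>t>0. dist yb (ys + t *\<^sub>R d) \<le> r \<and> Fm l p f (ys + t *\<^sub>R d) < Fm l p f ys"
proof -
  define m where "m = Fm l p f ys"
  define e where "e = ys - yb"
  have dnz: "d \<noteq> 0" using d0 by auto
  have dd: "d \<bullet> d > 0" using dnz by simp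
  have E1: "eventually (\<lambda>t. dist yb (ys + t *\<^sub>R d) \<le> r) (at_right 0)"
  proof (rule ev_right)
    show "\<exists>b>0. \<forall>t. 0 < t \<and> t < b \<longrightarrow> dist yb (ys + t *\<^sub>R d) \<le> r"
    proof (intro exI[of _ "- 2 * (e \<bullet> d) / (d \<bullet> d)"] conjI allI impI)
      show "0 < - 2 * (e \<bullet> d) / (d \<bullet> d)" by (intro divide_pos_pos) (use d0 dd in \<open>auto simp: e_def\<close>)
      fix t :: real assume t: "0 < t \<and> t < - 2 * (e \<bullet> d) / (d \<bullet> d)"
      then have "t * (d \<bullet> d) < - 2 * (e \<bullet> d)" using dd by (subst (asm) pos_less_divide_eq) auto
      then have neg: "t * (2 * (e \<bullet> d) + t * (d \<bullet> d)) < 0" by (intro mult_pos_neg) (use t in auto)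
      have "(e + t *\<^sub>R d) \<bullet> (e + t *\<^sub>R d) = e \<bullet> e + t * (2 * (e \<bullet> d) + t * (d \<bullet> d))"
        by (simp add: inner_add_left inner_add_right inner_commute algebra_simps)
      then have "(e + t *\<^sub>R d) \<bullet> (e + t *\<^sub>R d) < e \<bullet> e" using neg by simp
      then have "norm (e + t *\<^sub>R d) < norm e" by (simp add: norm_eq_sqrt_inner)
      moreover have "dist yb (ys + t *\<^sub>R d) = norm (e + t *\<^sub>R d)"
        by (simp add: e_def dist_norm norm_minus_commute algebra_simps)
      moreover have "dist yb ys = norm e" by (simp add: e_def dist_norm norm_minus_commute)
      ultimately show "dist yb (ys + t *\<^sub>R d) \<le> r" using ys by simp
    qed
  qed
  have E2: "\<forall>c\<in>{1..p}. eventually (\<lambda>t. phiv l f c (ys + t *\<^sub>R d) < m) (at_right 0)"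
  proof
    fix c assume c: "c \<in> {1..p}"
    show "eventually (\<lambda>t. phiv l f c (ys + t *\<^sub>R d) < m) (at_right 0)"
    proof (cases "phiv l f c ys = m")
      case True
      have gd: "((if c \<le> l then 1 else sgn (f c ys)) *\<^sub>R gr c ys) \<bullet> d < 0"
        using dT c True by (simp add: m_def)
      show ?thesis
      proof (cases "c \<le> l")
        case True
        have "((\<lambda>t. f c (ys + t *\<^sub>R d)) has_real_derivative (gr c ys \<bullet> d)) (at 0)"
          using der c by (intro line_deriv) blast
        from DERIV_neg_dec_right[OF this] gd True obtain \<delta> where \<delta>: "\<delta> > 0"
          "\<forall>h>0. h < \<delta> \<longrightarrow> f c (ys + 0 *\<^sub>R d) > f c (ys + (0 + h) *\<^sub>R d)" by auto
        show ?thesis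
        proof (rule ev_right, intro exI[of _ \<delta>] conjI allI impI)
          fix t :: real assume "0 < t \<and> t < \<delta>"
          then have "f c (ys + t *\<^sub>R d) < f c ys" using \<delta>(2) by simp
          then show "phiv l f c (ys + t *\<^sub>R d) < m"
            using \<open>phiv l f c ys = m\<close> True by (simp add: phiv_def)
        qed (use \<delta> in simp)
      next
        case False
        then obtain a b where ab: "\<forall>y. f c y = a \<bullet> y + b" using aff c by force
        have ga: "gr c ys = a" using affine_grad[OF ab] der c by blast
        define s where "s = f c ys"
        define g where "g = a \<bullet> d"
        have sm: "\<bar>s\<bar> = m" using \<open>phiv l f c ys = m\<close> False by (simp add: phiv_def s_def)
        have spos: "\<bar>s\<bar> > 0" using sm mpos by (simp add: m_def)
        have sg: "sgn s * g < 0" using gd False by (simp add: ga s_def g_def)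
        have lin: "f c (ys + t *\<^sub>R d) = s + t * g" for t
          using ab by (simp add: s_def g_def inner_add_right)
        have gnz: "g \<noteq> 0" using sg by auto
        show ?thesis
        proof (rule ev_right, intro exI[of _ "\<bar>s\<bar> / \<bar>g\<bar>"] conjI allI impI)
          show "0 < \<bar>s\<bar> / \<bar>g\<bar>" using spos gnz by simp
          fix t :: real assume t: "0 < t \<and> t < \<bar>s\<bar> / \<bar>g\<bar>"
          then have tg: "t * \<bar>g\<bar> < \<bar>s\<bar>" using gnz by (simp add: less_divide_eq)
          have "\<bar>s + t * g\<bar> < \<bar>s\<bar>"
          proof (cases "s > 0")
            case True
            then have "g < 0" using sg by (simp add: mult_less_0_iff)
            have a1: "t * g < 0" using t \<open>g < 0\<close> by (simp add: mult_pos_neg)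
            have a2: "t * \<bar>g\<bar> = - (t * g)" using \<open>g < 0\<close> by simp
            have "0 < s + t * g" using tg a2 True by simp
            then show ?thesis using a1 True by simp
          next
            case False
            then have "s < 0" using spos by simp
            then have "g > 0" using sg by (simp add: mult_less_0_iff)
            have a1: "t * g > 0" using t \<open>g > 0\<close> by simp
            have a2: "t * \<bar>g\<bar> = t * g" using \<open>g > 0\<close> by simp
            have "s + t * g < 0" using tg a2 \<open>s < 0\<close> by simp
            then show ?thesis using a1 \<open>s < 0\<close> by simp
          qed
          then show "phiv l f c (ys + t *\<^sub>R d) < m" using False lin sm by (simp add: phiv_def)
        qed
      qed
    next
      case False
      have "phiv l f c ys \<le> m" using Fm_ge[OF c] by (simp add: m_def)
      with False have lt: "phiv l f c ys < m" by simp
      have "continuous_on UNIV (\<lambda>y. phiv l f c y)" using cont c by (intro phiv_continuous) blast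
      then have "isCont (\<lambda>y. phiv l f c y) (ys + 0 *\<^sub>R d)" by (simp add: continuous_on_eq_continuous_at)
      moreover have "isCont (\<lambda>t::real. ys + t *\<^sub>R d) 0" by (intro continuous_intros)
      ultimately have "isCont (\<lambda>t. phiv l f c (ys + t *\<^sub>R d)) 0" by (rule isCont_o2[rotated])
      then have "((\<lambda>t. phiv l f c (ys + t *\<^sub>R d)) \<longlongrightarrow> phiv l f c ys) (at 0)"
        by (simp add: isCont_def)
      then have "((\<lambda>t. phiv l f c (ys + t *\<^sub>R d)) \<longlongrightarrow> phiv l f c ys) (at_right 0)"
        by (rule tendsto_mono[OF at_le[OF subset_UNIV]])
      from order_tendstoD(2)[OF this lt] show ?thesis .
    qed
  qed
  have "eventually (\<lambda>t. \<forall>c\<in>{1..p}. phiv l f c (ys + t *\<^sub>R d) < m) (at_right 0)"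
    using E2 by (intro eventually_ball_finite) auto
  then have "eventually (\<lambda>t. dist yb (ys + t *\<^sub>R d) \<le> r \<and> (\<forall>c\<in>{1..p}. phiv l f c (ys + t *\<^sub>R d) < m)) (at_right 0)"
    using E1 by (rule eventually_conj[rotated])
  then obtain b where b: "b > 0" "\<forall>t>0. t < b \<longrightarrow> dist yb (ys + t *\<^sub>R d) \<le> r \<and> (\<forall>c\<in>{1..p}. phiv l f c (ys + t *\<^sub>R d) < m)"
    unfolding eventually_at_right_field by auto
  define t where "t = b / 2"
  have t: "t > 0" "t < b" using b by (auto simp: t_def)
  then have "dist yb (ys + t *\<^sub>R d) \<le> r" "\<forall>c\<in>{1..p}. phiv l f c (ys + t *\<^sub>R d) < m" using b(2) by auto
  moreover have "Fm l p f (ys + t *\<^sub>R d) < m"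
    using calculation(2) mpos by (subst Fm_less_iff) (simp add: m_def)
  ultimately show ?thesis using t by (intro exI[of _ t]) (simp add: m_def)
qed



lemma step:
  fixes f :: "nat \<Rightarrow> 'b::euclidean_space \<Rightarrow> real" and gr :: "nat \<Rightarrow> 'b \<Rightarrow> 'b"
  assumes r: "r > 0"
    and cv: "\<forall>c\<in>{1..p}. c \<le> l \<longrightarrow> convex_on UNIV (f c)"
    and aff: "\<forall>c\<in>{1..p}. l < c \<longrightarrow> (\<exists>a b. \<forall>y. f c y = a \<bullet> y + b)"
    and cont: "\<forall>c\<in>{1..p}. continuous_on UNIV (f c)"
    and der: "\<forall>c\<in>{1..p}. \<forall>y\<in>cball yb r. (f c has_derivative (\<lambda>v. gr c y \<bullet> v)) (at y)"
    and feas: "Fm l p f w = 0"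
    and inf: "\<forall>y\<in>cball yb r. Fm l p f y > 0"
  shows "\<exists>ys \<mu> \<tau>. dist yb ys = r \<and> 0 < Fm l p f ys \<and> Fm l p f ys \<le> Fm l p f yb \<and> \<tau> > 0 \<and>
     (\<forall>c\<in>{1..l}. 0 \<le> \<mu> c \<and> (\<mu> c \<noteq> 0 \<longrightarrow> f c ys = Fm l p f ys)) \<and>
     (\<Sum>c\<in>{1..p}. \<mu> c *\<^sub>R gr c ys) = - (\<tau> *\<^sub>R (ys - yb))"
proof -
  let ?F = "Fm l p f"
  have contF: "continuous_on (cball yb r) ?F"
    using Fm_continuous[OF cont] by (rule continuous_on_subset) simp
  have "cball yb r \<noteq> {}" using r by simp
  from continuous_attains_inf[OF compact_cball this contF]
  obtain ys where ysb: "ys \<in> cball yb r" and ysmin: "\<forall>y\<in>cball yb r. ?F ys \<le> ?F y" by blast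
  define m where "m = ?F ys"
  have mpos: "m > 0" using inf ysb by (simp add: m_def)
  have ybin: "yb \<in> cball yb r" using r by simp
  have mle: "m \<le> ?F yb" using ysmin ybin by (simp add: m_def)
  have convF: "convex_on UNIV ?F" using Fm_convex[OF cv aff] .
  have sphere: "dist yb ys = r"
  proof (rule ccontr)
    assume "dist yb ys \<noteq> r"
    then have lt: "dist yb ys < r" using ysb by simp
    define \<delta> where "\<delta> = r - dist yb ys"
    have \<delta>: "\<delta> > 0" using lt by (simp add: \<delta>_def)
    define t where "t = min (1/2) (\<delta> / (norm (w - ys) + 1))"
    have np: "norm (w - ys) + 1 > 0" by (simp add: add_nonneg_pos)
    have t: "0 < t" "t < 1" using \<delta> np by (auto simp: t_def intro: divide_pos_pos)
    have tn: "t * norm (w - ys) < \<delta>"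
    proof -
      have "t \<le> \<delta> / (norm (w - ys) + 1)" by (simp add: t_def)
      then have "t * (norm (w - ys) + 1) \<le> \<delta>" using np by (simp add: le_divide_eq)
      then show ?thesis using t by (simp add: algebra_simps)
    qed
    define z where "z = (1 - t) *\<^sub>R ys + t *\<^sub>R w"
    have z: "z = ys + t *\<^sub>R (w - ys)" by (simp add: z_def algebra_simps)
    have "dist yb z \<le> dist yb ys + dist ys z" by (rule dist_triangle)
    also have "dist ys z = t * norm (w - ys)" using t by (simp add: z dist_norm)
    finally have "dist yb z \<le> r" using tn by (simp add: \<delta>_def)
    then have zin: "z \<in> cball yb r" by simp
    have "?F z \<le> (1 - t) * ?F ys + t * ?F w"
      unfolding z_def using t by (intro convex_onD[OF convF]) auto
    also have "\<dots> = (1 - t) * m" using feas by (simp add: m_def)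
    also have "\<dots> < m" using t mpos by simp
    finally have "?F z < ?F ys" by (simp add: m_def)
    then show False using ysmin zin by fastforce
  qed
  define T where "T = {c\<in>{1..p}. phiv l f c ys = m}"
  define \<sigma> where "\<sigma> c = (if c \<le> l then 1 else sgn (f c ys))" for c
  define V where "V c = (if c = 0 then ys - yb else \<sigma> c *\<^sub>R gr c ys)" for c
  have Tsub: "T \<subseteq> {1..p}" by (auto simp: T_def)
  have Tfin: "finite T" using Tsub finite_subset by blast
  have T0: "0 \<notin> T" using Tsub by auto
  define C where "C = insert 0 T"
  have Cfin: "finite C" using Tfin by (simp add: C_def)
  have der': "\<forall>c\<in>{1..p}. (f c has_derivative (\<lambda>v. gr c ys \<bullet> v)) (at ys)" using der ysb by blast
  have hull0: "0 \<in> convex hull (V ` C)"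
  proof (rule ccontr)
    assume n0: "0 \<notin> convex hull (V ` C)"
    have cl: "closed (convex hull (V ` C))"
      by (intro compact_imp_closed finite_imp_compact_convex_hull) (simp add: Cfin)
    from separating_hyperplane_closed_0[OF convex_convex_hull cl n0]
    obtain a b where ab: "a \<noteq> 0" "0 < b" "\<forall>x\<in>convex hull (V ` C). a \<bullet> x > b" by blast
    have Vd: "V c \<bullet> (-a) < 0" if "c \<in> C" for c
    proof -
      have "V c \<in> convex hull (V ` C)" using that by (intro hull_inc) simp
      then have "a \<bullet> V c > b" using ab(3) by blast
      then show ?thesis using ab(2) by (simp add: inner_commute)
    qed
    have d0: "(ys - yb) \<bullet> (-a) < 0" using Vd[of 0] by (simp add: C_def V_def)
    have dT: "\<forall>c\<in>{1..p}. phiv l f c ys = ?F ys \<longrightarrow> ((if c \<le> l then 1 else sgn (f c ys)) *\<^sub>R gr c ys) \<bullet> (-a) < 0"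
    proof (intro ballI impI)
      fix c assume c: "c \<in> {1..p}" "phiv l f c ys = ?F ys"
      then have "c \<in> C" "c \<noteq> 0" by (auto simp: C_def T_def m_def)
      from Vd[OF this(1)] this(2) show "((if c \<le> l then 1 else sgn (f c ys)) *\<^sub>R gr c ys) \<bullet> (-a) < 0"
        by (simp add: V_def \<sigma>_def)
    qed
    have ysd: "dist yb ys \<le> r" using ysb by simp
    have mp: "0 < ?F ys" using mpos by (simp add: m_def)
    from descent[where p=p and l=l and f=f and gr=gr and ys=ys and yb=yb and r=r and d="-a", OF aff cont der' ysd mp d0 dT] obtain t where
      t: "t > 0" "dist yb (ys + t *\<^sub>R (-a)) \<le> r" "?F (ys + t *\<^sub>R (-a)) < ?F ys"
      by (auto simp: m_def)
    have "ys + t *\<^sub>R (-a) \<in> cball yb r" using t(2) by simp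
    then have "?F ys \<le> ?F (ys + t *\<^sub>R (-a))" using ysmin by blast
    then show False using t(3) by simp
  qed
  from hull_coeffs[OF Cfin hull0] obtain lam where
    lam: "\<forall>c\<in>C. lam c \<ge> 0" "sum lam C = 1" "(\<Sum>c\<in>C. lam c *\<^sub>R V c) = 0" by blast
  define \<tau> where "\<tau> = lam 0"
  have tau0: "\<tau> \<ge> 0" using lam(1) by (simp add: \<tau>_def C_def)
  have "(\<Sum>c\<in>C. lam c *\<^sub>R V c) = lam 0 *\<^sub>R V 0 + (\<Sum>c\<in>T. lam c *\<^sub>R V c)"
    unfolding C_def using Tfin T0 by (rule sum.insert)
  then have sumT: "(\<Sum>c\<in>T. lam c *\<^sub>R V c) = - (\<tau> *\<^sub>R (ys - yb))"
    using lam(3) by (simp add: V_def \<tau>_def eq_neg_iff_add_eq_0 add.commute)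
  have sumlam: "sum lam C = lam 0 + sum lam T" unfolding C_def using Tfin T0 by (rule sum.insert)
  define \<mu> where "\<mu> c = (if c \<in> T then lam c * \<sigma> c else 0)" for c
  have musum: "(\<Sum>c\<in>{1..p}. \<mu> c *\<^sub>R gr c ys) = (\<Sum>c\<in>T. lam c *\<^sub>R V c)"
  proof -
    have "(\<Sum>c\<in>{1..p}. \<mu> c *\<^sub>R gr c ys) = (\<Sum>c\<in>T. \<mu> c *\<^sub>R gr c ys)"
      by (rule sum.mono_neutral_right) (use Tsub in \<open>auto simp: \<mu>_def\<close>)
    also have "\<dots> = (\<Sum>c\<in>T. lam c *\<^sub>R V c)"
      by (intro sum.cong refl) (use T0 in \<open>auto simp: \<mu>_def V_def\<close>)
    finally show ?thesis .
  qed
  have taupos: "\<tau> > 0"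
  proof (rule ccontr)
    assume "\<not> \<tau> > 0"
    then have t0: "\<tau> = 0" using tau0 by simp
    then have sT1: "sum lam T = 1" using sumlam lam(2) by (simp add: \<tau>_def)
    have sT0: "(\<Sum>c\<in>T. lam c *\<^sub>R V c) = 0" using sumT t0 by simp
    have wle: "\<forall>c\<in>{1..p}. phiv l f c w \<le> 0" using feas Fm_le_iff[of l p f w 0] by simp
    have key: "V c \<bullet> (w - ys) \<le> - m" if cT: "c \<in> T" for c
    proof -
      have c: "c \<in> {1..p}" "phiv l f c ys = m" "c \<noteq> 0" using cT by (auto simp: T_def)
      have pw: "phiv l f c w \<le> 0" using wle c(1) by blast
      show ?thesis
      proof (cases "c \<le> l")
        case True
        have "convex_on UNIV (f c)" using cv c(1) True by blast
        from convex_grad_ineq[OF this, of "gr c ys" ys w] der' c(1)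
        have "f c w \<ge> f c ys + gr c ys \<bullet> (w - ys)" by blast
        then show ?thesis using True c pw by (simp add: V_def \<sigma>_def phiv_def)
      next
        case False
        then obtain a b where ab: "\<forall>y. f c y = a \<bullet> y + b" using aff c(1) by force
        have ga: "gr c ys = a" using affine_grad[OF ab] der' c(1) by blast
        have fw: "f c w = 0" using pw False by (simp add: phiv_def)
        have "a \<bullet> (w - ys) = f c w - f c ys" using ab by (simp add: inner_diff_right)
        then have "a \<bullet> (w - ys) = - f c ys" using fw by simp
        moreover have "\<bar>f c ys\<bar> = m" using c(2) False by (simp add: phiv_def)
        moreover have "sgn (f c ys) * f c ys = \<bar>f c ys\<bar>" by (simp add: sgn_if)
        ultimately have "sgn (f c ys) * (a \<bullet> (w - ys)) = - m" by simp
        then show ?thesis using False c(3) by (simp add: V_def \<sigma>_def ga)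
      qed
    qed
    have "0 = (\<Sum>c\<in>T. lam c *\<^sub>R V c) \<bullet> (w - ys)" using sT0 by simp
    also have "\<dots> = (\<Sum>c\<in>T. lam c * (V c \<bullet> (w - ys)))" by (simp add: inner_sum_left)
    also have "\<dots> \<le> (\<Sum>c\<in>T. lam c * (- m))"
      using lam(1) key by (intro sum_mono mult_left_mono) (auto simp: C_def)
    also have "\<dots> = (\<Sum>c\<in>T. lam c) * (- m)" by (rule sum_distrib_right[symmetric])
    also have "\<dots> = - m" using sT1 by simp
    finally show False using mpos by simp
  qed
  have muI: "\<forall>c\<in>{1..l}. 0 \<le> \<mu> c \<and> (\<mu> c \<noteq> 0 \<longrightarrow> f c ys = ?F ys)"
  proof
    fix c assume c: "c \<in> {1..l}"
    show "0 \<le> \<mu> c \<and> (\<mu> c \<noteq> 0 \<longrightarrow> f c ys = ?F ys)"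
    proof (cases "c \<in> T")
      case True
      then have "lam c \<ge> 0" using lam(1) by (simp add: C_def)
      moreover have "f c ys = m" using True c by (simp add: T_def phiv_def)
      ultimately show ?thesis using True c by (simp add: \<mu>_def \<sigma>_def m_def)
    next
      case False
      then show ?thesis by (simp add: \<mu>_def)
    qed
  qed
  show ?thesis
    using sphere mpos mle taupos muI musum sumT
    by (intro exI[of _ ys] exI[of _ \<mu>] exI[of _ \<tau>]) (simp add: m_def)
qed



lemma estimate:
  fixes f :: "nat \<Rightarrow> 'b::euclidean_space \<Rightarrow> real" and gr :: "nat \<Rightarrow> 'b \<Rightarrow> 'b"
  assumes cv: "\<forall>c\<in>{1..p}. c \<le> l \<longrightarrow> convex_on UNIV (f c)"
    and aff: "\<forall>c\<in>{1..p}. l < c \<longrightarrow> (\<exists>a b. \<forall>y. f c y = a \<bullet> y + b)"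
    and der: "\<forall>c\<in>{1..p}. (f c has_derivative (\<lambda>v. gr c ys \<bullet> v)) (at ys)"
    and K: "K \<subseteq> {1..l}" and S: "S \<subseteq> {l+1..p}" and lp: "l \<le> p"
    and Kact: "\<forall>i\<in>K. f i ys = Fm l p f ys"
    and cpos: "\<forall>i\<in>K. c i \<ge> 0"
    and mle: "Fm l p f ys \<le> Fm l p f yb"
    and eq: "(\<Sum>i\<in>K\<union>S. c i *\<^sub>R gr i ys) = - (\<tau> *\<^sub>R (ys - yb))"
  shows "\<tau> * (norm (ys - yb))\<^sup>2 \<le> 2 * Fm l p f yb * (\<Sum>i\<in>K\<union>S. \<bar>c i\<bar>)"
proof -
  let ?F = "Fm l p f"
  have F0: "0 \<le> ?F yb" "0 \<le> ?F ys" by (rule Fm_nonneg)+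
  have fin: "finite (K \<union> S)" using K S finite_subset by blast
  have trm: "c i * (gr i ys \<bullet> (yb - ys)) \<le> \<bar>c i\<bar> * (2 * ?F yb)" if i: "i \<in> K \<union> S" for i
  proof (cases "i \<in> K")
    case True
    then have ip: "i \<in> {1..p}" "i \<le> l" using K S lp by auto
    have "convex_on UNIV (f i)" using cv ip by blast
    from convex_grad_ineq[OF this, of "gr i ys" ys yb] der ip
    have "f i yb \<ge> f i ys + gr i ys \<bullet> (yb - ys)" by blast
    moreover have "f i yb \<le> ?F yb" using Fm_ge[OF ip(1), of l f yb] phiv_ge(1)[of f i yb l] by linarith
    moreover have "f i ys = ?F ys" using Kact True by blast
    ultimately have "gr i ys \<bullet> (yb - ys) \<le> ?F yb" using F0 by linarith
    then have "c i * (gr i ys \<bullet> (yb - ys)) \<le> c i * ?F yb" using cpos True by (intro mult_left_mono) auto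
    also have "\<dots> \<le> \<bar>c i\<bar> * (2 * ?F yb)" using cpos True F0 by (simp add: mult_left_mono)
    finally show ?thesis .
  next
    case False
    then have iS: "i \<in> S" using i by blast
    then have ip: "i \<in> {1..p}" "l < i" using S by auto
    then obtain a b where ab: "\<forall>y. f i y = a \<bullet> y + b" using aff by force
    have ga: "gr i ys = a" using affine_grad[OF ab] der ip by blast
    have "gr i ys \<bullet> (yb - ys) = f i yb - f i ys" using ab ga by (simp add: inner_diff_right)
    moreover have "\<bar>f i yb\<bar> \<le> ?F yb" using Fm_ge[OF ip(1), of l f yb] phiv_ge(2)[OF ip(2), of f yb] by linarith
    moreover have "\<bar>f i ys\<bar> \<le> ?F ys" using Fm_ge[OF ip(1), of l f ys] phiv_ge(2)[OF ip(2), of f ys] by linarith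
    ultimately have "\<bar>gr i ys \<bullet> (yb - ys)\<bar> \<le> 2 * ?F yb" using mle by linarith
    then have "\<bar>c i\<bar> * \<bar>gr i ys \<bullet> (yb - ys)\<bar> \<le> \<bar>c i\<bar> * (2 * ?F yb)" by (intro mult_left_mono) auto
    moreover have "c i * (gr i ys \<bullet> (yb - ys)) \<le> \<bar>c i\<bar> * \<bar>gr i ys \<bullet> (yb - ys)\<bar>"
      by (metis abs_ge_self abs_mult)
    ultimately show ?thesis by linarith
  qed
  have "\<tau> * (norm (ys - yb))\<^sup>2 = (- (\<tau> *\<^sub>R (ys - yb))) \<bullet> (yb - ys)"
    by (simp add: power2_norm_eq_inner inner_diff_right inner_diff_left inner_commute algebra_simps)
  also have "\<dots> = (\<Sum>i\<in>K\<union>S. c i * (gr i ys \<bullet> (yb - ys)))"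
    unfolding eq[symmetric] by (simp add: inner_sum_left)
  also have "\<dots> \<le> (\<Sum>i\<in>K\<union>S. \<bar>c i\<bar> * (2 * ?F yb))" by (intro sum_mono trm)
  also have "\<dots> = 2 * ?F yb * (\<Sum>i\<in>K\<union>S. \<bar>c i\<bar>)" by (simp add: sum_distrib_right mult.commute)
  finally show ?thesis .
qed

lemma indep_fam:
  fixes w :: "nat \<Rightarrow> 'a::real_vector"
  assumes S: "finite S" and nd: "\<not> fam_lin_dep w S"
  shows "inj_on w S" "independent (w ` S)"
proof -
  show inj: "inj_on w S"
  proof (rule inj_onI, rule ccontr)
    fix i j assume ij: "i \<in> S" "j \<in> S" "w i = w j" "i \<noteq> j"
    define c where "c k = (if k = i then 1 else if k = j then -1 else (0::real))" for k
    have "(\<Sum>k\<in>S. c k *\<^sub>R w k) = (\<Sum>k\<in>S. (if k = i then w i else 0) - (if k = j then w j else 0))"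
      by (intro sum.cong refl) (use ij in \<open>auto simp: c_def\<close>)
    also have "\<dots> = w i - w j" using S ij by (simp add: sum_subtractf sum.delta)
    also have "\<dots> = 0" using ij by simp
    finally have "fam_lin_dep w S" unfolding fam_lin_dep_def using ij by (intro exI[of _ c]) (auto simp: c_def)
    then show False using nd by simp
  qed
  show "independent (w ` S)"
  proof
    assume "dependent (w ` S)"
    then obtain u where u: "\<exists>v\<in>w ` S. u v \<noteq> 0" "(\<Sum>v\<in>w ` S. u v *\<^sub>R v) = 0"
      using dependent_finite[of "w ` S"] S by auto
    have "(\<Sum>i\<in>S. u (w i) *\<^sub>R w i) = (\<Sum>v\<in>w ` S. u v *\<^sub>R v)"
      by (rule sum.reindex[OF inj, symmetric, unfolded o_def])
    also have "\<dots> = 0" by (rule u(2))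
    finally have "fam_lin_dep w S" unfolding fam_lin_dep_def using u(1) by (intro exI[of _ "\<lambda>i. u (w i)"]) auto
    then show False using nd by simp
  qed
qed

lemma dim_fam:
  fixes w :: "nat \<Rightarrow> 'a::euclidean_space"
  assumes S: "finite S" and nd: "\<not> fam_lin_dep w S"
  shows "dim (span (w ` S)) = card S"
  using dim_span_eq_card_independent[OF indep_fam(2)[OF S nd]] card_image[OF indep_fam(1)[OF S nd]]
  by simp

lemma span_eq_rank:
  fixes w :: "nat \<Rightarrow> 'a::euclidean_space"
  assumes J: "finite J" and SJ: "S \<subseteq> J" and nd: "\<not> fam_lin_dep w S" and rk: "fam_rank w J = card S"
  shows "span (w ` J) = span (w ` S)"
proof -
  have S: "finite S" using J SJ finite_subset by blast
  have sub: "span (w ` S) \<subseteq> span (w ` J)" using SJ by (intro span_mono) auto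
  have "dim (span (w ` S)) = dim (span (w ` J))" using dim_fam[OF S nd] rk by (simp add: fam_rank_def)
  then have "span (w ` S) = span (w ` J)"
    by (intro subspace_dim_equal) (auto simp: sub)
  then show ?thesis by simp
qed

lemma rank_basis:
  fixes w :: "nat \<Rightarrow> 'a::euclidean_space"
  assumes S: "finite S" and nd: "\<not> fam_lin_dep w S" and sp: "span (w ` S) = span (w ` J)"
  shows "fam_rank w J = card S"
  using dim_fam[OF S nd] sp by (simp add: fam_rank_def)

lemma freq_subseq:
  assumes "frequently P sequentially"
  shows "\<exists>\<sigma>::nat\<Rightarrow>nat. strict_mono \<sigma> \<and> (\<forall>k. P (\<sigma> k))"
proof -
  have inf: "infinite {k. P k}" using assms by (simp add: frequently_cofinite[symmetric] cofinite_eq_sequentially)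
  have "strict_mono (enumerate {k. P k})" by (rule strict_mono_enumerate[OF inf])
  moreover have "\<forall>k. P (enumerate {k. P k} k)" using enumerate_in_set[OF inf] by simp
  ultimately show ?thesis by (intro exI[of _ "enumerate {k. P k}"]) simp
qed

lemma dist_pair_le: "dist (a, b) (c, d) \<le> dist a c + dist b d"
  unfolding dist_Pair_Pair by (rule sqrt_sum_squares_le_sum) auto



lemma gam_iff:
  fixes h :: "nat \<Rightarrow> 'a \<Rightarrow> 'b \<Rightarrow> ereal"
  assumes lp: "l \<le> p" and fin: "\<forall>c\<in>{1..p}. \<bar>h c x y\<bar> \<noteq> \<infinity>"
  shows "y \<in> Gam h l p x \<longleftrightarrow> Fm l p (\<lambda>c y. real_of_ereal (h c x y)) y \<le> 0"
proof -
  have e: "h c x y = ereal (real_of_ereal (h c x y))" if "c \<in> {1..p}" for c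
    using fin that by (simp add: ereal_real')
  have "y \<in> Gam h l p x \<longleftrightarrow> (\<forall>c\<in>{1..p}. phiv l (\<lambda>c y. real_of_ereal (h c x y)) c y \<le> 0)"
  proof
    assume y: "y \<in> Gam h l p x"
    show "\<forall>c\<in>{1..p}. phiv l (\<lambda>c y. real_of_ereal (h c x y)) c y \<le> 0"
    proof
      fix c assume c: "c \<in> {1..p}"
      show "phiv l (\<lambda>c y. real_of_ereal (h c x y)) c y \<le> 0"
      proof (cases "c \<le> l")
        case True
        then have "h c x y \<le> 0" using y c by (auto simp: Gam_def Icon_def)
        then have "ereal (real_of_ereal (h c x y)) \<le> 0" using e[OF c] by simp
        then show ?thesis using True by (simp add: phiv_def)
      next
        case False
        then have "h c x y = 0" using y c by (auto simp: Gam_def Jcon_def)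
        then show ?thesis using False by (simp add: phiv_def)
      qed
    qed
  next
    assume H: "\<forall>c\<in>{1..p}. phiv l (\<lambda>c y. real_of_ereal (h c x y)) c y \<le> 0"
    have "\<forall>i\<in>Icon l. h i x y \<le> 0"
    proof
      fix i assume i: "i \<in> Icon l"
      then have ip: "i \<in> {1..p}" "i \<le> l" using lp by (auto simp: Icon_def)
      have r: "real_of_ereal (h i x y) \<le> 0" using bspec[OF H ip(1)] ip(2) by (simp add: phiv_def)
      have "h i x y = ereal (real_of_ereal (h i x y))" by (rule e[OF ip(1)])
      also have "\<dots> \<le> ereal 0" using r by simp
      finally show "h i x y \<le> 0" by (simp add: zero_ereal_def)
    qed
    moreover have "\<forall>i\<in>Jcon l p. h i x y = 0"
    proof
      fix i assume i: "i \<in> Jcon l p"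
      then have ip: "i \<in> {1..p}" "\<not> i \<le> l" by (auto simp: Jcon_def)
      have "\<bar>real_of_ereal (h i x y)\<bar> \<le> 0" using bspec[OF H ip(1)] ip(2) by (simp add: phiv_def)
      then have "real_of_ereal (h i x y) = 0" by (simp only: abs_le_zero_iff)
      then show "h i x y = 0" using e[OF ip(1)] by (simp add: zero_ereal_def)
    qed
    ultimately show "y \<in> Gam h l p x" by (simp add: Gam_def)
  qed
  also have "\<dots> \<longleftrightarrow> Fm l p (\<lambda>c y. real_of_ereal (h c x y)) y \<le> 0"
    by (simp add: Fm_le_iff)
  finally show ?thesis .
qed

lemma conv_real:
  fixes g :: "'b::real_vector \<Rightarrow> ereal"
  assumes cv: "ereal_convex g" and fin: "\<forall>y. \<bar>g y\<bar> \<noteq> \<infinity>"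
  shows "convex_on UNIV (\<lambda>y. real_of_ereal (g y))"
proof (rule convex_onI)
  fix t :: real and x y :: 'b assume t: "0 < t" "t < 1"
  let ?E = "{(y, t::real). g y \<le> ereal t}"
  have e: "g z = ereal (real_of_ereal (g z))" for z using fin by (simp add: ereal_real')
  have "(x, real_of_ereal (g x)) \<in> ?E" "(y, real_of_ereal (g y)) \<in> ?E" using e by (auto intro: eq_refl)
  then have "(1 - t) *\<^sub>R (x, real_of_ereal (g x)) + t *\<^sub>R (y, real_of_ereal (g y)) \<in> ?E"
    using cv t unfolding ereal_convex_def by (intro convexD) auto
  then have "g ((1 - t) *\<^sub>R x + t *\<^sub>R y) \<le> ereal ((1 - t) * real_of_ereal (g x) + t * real_of_ereal (g y))"
    by simp
  then show "real_of_ereal (g ((1 - t) *\<^sub>R x + t *\<^sub>R y)) \<le> (1 - t) * real_of_ereal (g x) + t * real_of_ereal (g y)"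
    using e[of "(1 - t) *\<^sub>R x + t *\<^sub>R y"] by (metis ereal_less_eq(3))
qed simp

lemma aff_real:
  fixes g :: "'b::real_inner \<Rightarrow> ereal"
  assumes "ereal_affine g"
  shows "\<exists>a b. \<forall>y. real_of_ereal (g y) = a \<bullet> y + b" "\<forall>y. \<bar>g y\<bar> \<noteq> \<infinity>"
proof -
  obtain a b where ab: "\<forall>y. g y = ereal (a \<bullet> y + b)" using assms unfolding ereal_affine_def by blast
  show "\<exists>a b. \<forall>y. real_of_ereal (g y) = a \<bullet> y + b" using ab by (intro exI[of _ a] exI[of _ b]) simp
  show "\<forall>y. \<bar>g y\<bar> \<noteq> \<infinity>" using ab by simp
qed



lemma seq_cont:
  fixes g :: "'a::metric_space \<Rightarrow> 'b::metric_space"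
  assumes "open W" "continuous_on W g" "z0 \<in> W" "Z \<longlonglongrightarrow> z0"
  shows "(\<lambda>k. g (Z k)) \<longlonglongrightarrow> g z0"
proof -
  have "isCont g z0" using assms(1-3) continuous_on_eq_continuous_at by blast
  from isCont_tendsto_compose[OF this assms(4)] show ?thesis .
qed

lemma phiv_tendsto:
  assumes "(\<lambda>k. f k c (y k)) \<longlonglongrightarrow> fz c yz"
  shows "(\<lambda>k. phiv l (f k) c (y k)) \<longlonglongrightarrow> phiv l fz c yz"
  using assms unfolding phiv_def by (cases "c \<le> l") (auto intro: tendsto_rabs)

lemma Fm_bound: "Fm l p f y \<le> (\<Sum>c\<in>{1..p}. max 0 (phiv l f c y))"
proof -
  have "\<forall>c\<in>{1..p}. phiv l f c y \<le> (\<Sum>c\<in>{1..p}. max 0 (phiv l f c y))"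
  proof
    fix c assume c: "c \<in> {1..p}"
    have "phiv l f c y \<le> max 0 (phiv l f c y)" by simp
    also have "\<dots> = (\<Sum>c'\<in>{c}. max 0 (phiv l f c' y))" by simp
    also have "\<dots> \<le> (\<Sum>c\<in>{1..p}. max 0 (phiv l f c y))"
      by (rule sum_mono2) (use c in auto)
    finally show "phiv l f c y \<le> (\<Sum>c\<in>{1..p}. max 0 (phiv l f c y))" .
  qed
  moreover have "0 \<le> (\<Sum>c\<in>{1..p}. max 0 (phiv l f c y))" by (intro sum_nonneg) simp
  ultimately show ?thesis by (subst Fm_le_iff) simp
qed

theorem corollary3p4:
  fixes h :: "nat \<Rightarrow> real^'n \<Rightarrow> real^'m \<Rightarrow> ereal"
    and l p :: nat and xbar :: "real^'n"
  assumes lp: "l \<le> p"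
    and xbar_dom: "xbar \<in> domG (Gam h l p)"
    and smooth: "\<exists>W. open W \<and> {xbar} \<times> Gam h l p xbar \<subseteq> W \<and>
        (\<forall>i\<in>{1..p}.
           (\<forall>(x, y)\<in>W. \<bar>h i x y\<bar> \<noteq> \<infinity>) \<and>
           continuous_on W (\<lambda>(x, y). real_of_ereal (h i x y)) \<and>
           (\<forall>(x, y)\<in>W. (\<lambda>z. real_of_ereal (h i x z)) differentiable (at y)) \<and>
           continuous_on W (\<lambda>(x, y). grad_y (h i) x y))"
    and cont_y: "\<forall>x\<in>domG (Gam h l p). \<forall>i\<in>{1..p}.
        (\<forall>y. \<bar>h i x y\<bar> \<noteq> \<infinity>) \<and> continuous_on UNIV (\<lambda>y. real_of_ereal (h i x y))"
    and A1: "\<forall>x. (\<forall>i\<in>Icon l. ereal_convex (h i x)) \<and> (\<forall>i\<in>Jcon l p. ereal_affine (h i x))"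
    and A2: "locally_bounded_at (Gam h l p) xbar"
    and rcpld: "\<forall>ybar\<in>Gam h l p xbar. RCPLD h l p (domG (Gam h l p)) xbar ybar"
  shows "lsc_wrt (Gam h l p) xbar (domG (Gam h l p))"
proof -
  define G where "G = Gam h l p"
  define Om where "Om = domG G"
  define fx where "fx x = (\<lambda>c y. real_of_ereal (h c x y))" for x
  define gx where "gx x = (\<lambda>c y. grad_y (h c) x y)" for x
  obtain W where Wo: "open W" and Wsub: "{xbar} \<times> G xbar \<subseteq> W"
    and Wp: "\<forall>i\<in>{1..p}.
           (\<forall>(x, y)\<in>W. \<bar>h i x y\<bar> \<noteq> \<infinity>) \<and>
           continuous_on W (\<lambda>(x, y). real_of_ereal (h i x y)) \<and>
           (\<forall>(x, y)\<in>W. (\<lambda>z. real_of_ereal (h i x z)) differentiable (at y)) \<and>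
           continuous_on W (\<lambda>(x, y). grad_y (h i) x y)"
    using smooth unfolding G_def by blast
  have Wp1: "\<forall>(x, y)\<in>W. \<bar>h c x y\<bar> \<noteq> \<infinity>" if "c \<in> {1..p}" for c
    using bspec[OF Wp that] by (rule conjunct1)
  have Wp2: "continuous_on W (\<lambda>(x, y). real_of_ereal (h c x y))" if "c \<in> {1..p}" for c
    using bspec[OF Wp that] by (rule conjunct1[OF conjunct2])
  have Wp3: "\<forall>(x, y)\<in>W. (\<lambda>z. real_of_ereal (h c x z)) differentiable (at y)" if "c \<in> {1..p}" for c
    using bspec[OF Wp that] by (rule conjunct1[OF conjunct2[OF conjunct2]])
  have Wp4: "continuous_on W (\<lambda>(x, y). grad_y (h c) x y)" if "c \<in> {1..p}" for c
    using bspec[OF Wp that] by (rule conjunct2[OF conjunct2[OF conjunct2]])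
  have Wfin: "\<bar>h c x y\<bar> \<noteq> \<infinity>" if "(x, y) \<in> W" "c \<in> {1..p}" for x y c
    using bspec[OF Wp1[OF that(2)] that(1)] by simp
  have Wcont: "continuous_on W (\<lambda>z. fx (fst z) c (snd z))" if "c \<in> {1..p}" for c
  proof -
    have "continuous_on W (\<lambda>(x, y). real_of_ereal (h c x y))" using Wp2[OF that] .
    then show ?thesis by (simp add: fx_def case_prod_beta')
  qed
  have Wgcont: "continuous_on W (\<lambda>z. gx (fst z) c (snd z))" if "c \<in> {1..p}" for c
  proof -
    have "continuous_on W (\<lambda>(x, y). grad_y (h c) x y)" using Wp4[OF that] .
    then show ?thesis by (simp add: gx_def case_prod_beta')
  qed
  have Wder: "(fx x c has_derivative (\<lambda>v. gx x c y \<bullet> v)) (at y)" if "(x, y) \<in> W" "c \<in> {1..p}" for x y c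
  proof -
    have "(\<lambda>z. real_of_ereal (h c x z)) differentiable (at y)" using bspec[OF Wp3[OF that(2)] that(1)] by simp
    from grad_y_works[of "h c" x y, OF this] show ?thesis by (simp add: fx_def gx_def)
  qed
  have Omc: "(\<forall>y. \<bar>h c x y\<bar> \<noteq> \<infinity>) \<and> continuous_on UNIV (\<lambda>y. real_of_ereal (h c x y))"
    if "x \<in> Om" "c \<in> {1..p}" for x c
  proof -
    have "x \<in> domG (Gam h l p)" using that(1) by (simp add: Om_def G_def)
    from bspec[OF bspec[OF cont_y this] that(2)] show ?thesis .
  qed
  have Omfin: "\<forall>y. \<bar>h c x y\<bar> \<noteq> \<infinity>" if "x \<in> Om" "c \<in> {1..p}" for x c
    using Omc[OF that] by (rule conjunct1)
  have Omcont: "continuous_on UNIV (fx x c)" if "x \<in> Om" "c \<in> {1..p}" for x c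
    using Omc[OF that] unfolding fx_def by (rule conjunct2)
  have Omcv: "\<forall>c\<in>{1..p}. c \<le> l \<longrightarrow> convex_on UNIV (fx x c)" if "x \<in> Om" for x
  proof (intro ballI impI)
    fix c assume c: "c \<in> {1..p}" "c \<le> l"
    then have "ereal_convex (h c x)" using A1 by (auto simp: Icon_def)
    from conv_real[OF this Omfin[OF that c(1)]] show "convex_on UNIV (fx x c)" by (simp add: fx_def)
  qed
  have aff: "\<forall>c\<in>{1..p}. l < c \<longrightarrow> (\<exists>a b. \<forall>y. fx x c y = a \<bullet> y + b)" for x
  proof (intro ballI impI)
    fix c assume c: "c \<in> {1..p}" "l < c"
    then have "ereal_affine (h c x)" using A1 by (auto simp: Jcon_def)
    from aff_real(1)[OF this] show "\<exists>a b. \<forall>y. fx x c y = a \<bullet> y + b" by (simp add: fx_def)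
  qed
  have gamOm: "y \<in> G x \<longleftrightarrow> Fm l p (fx x) y \<le> 0" if "x \<in> Om" for x y
  proof -
    have fin: "\<forall>c\<in>{1..p}. \<bar>h c x y\<bar> \<noteq> \<infinity>"
    proof
      fix c assume "c \<in> {1..p}"
      from spec[OF Omfin[OF that this]] show "\<bar>h c x y\<bar> \<noteq> \<infinity>" .
    qed
    from gam_iff[where h=h and x=x and y=y, OF lp fin] show ?thesis unfolding G_def fx_def .
  qed
  have gamW: "y \<in> G x \<longleftrightarrow> Fm l p (fx x) y \<le> 0" if "(x, y) \<in> W" for x y
  proof -
    have fin: "\<forall>c\<in>{1..p}. \<bar>h c x y\<bar> \<noteq> \<infinity>"
    proof
      fix c assume "c \<in> {1..p}"
      from Wfin[OF that this] show "\<bar>h c x y\<bar> \<noteq> \<infinity>" .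
    qed
    from gam_iff[where h=h and x=x and y=y, OF lp fin] show ?thesis unfolding G_def fx_def .
  qed
  have xbarOm: "xbar \<in> Om" using xbar_dom by (simp add: Om_def G_def)
  show ?thesis
    unfolding lsc_wrt_def G_def[symmetric] Om_def[symmetric]
  proof (intro allI impI)
    fix Ob assume Ob: "open Ob \<and> G xbar \<inter> Ob \<noteq> {}"
    then obtain yb where yb: "yb \<in> G xbar" "yb \<in> Ob" by blast
    show "\<exists>V. open V \<and> xbar \<in> V \<and> (\<forall>x\<in>V \<inter> Om. G x \<inter> Ob \<noteq> {})"
    proof (rule ccontr)
      assume neg: "\<not> (\<exists>V. open V \<and> xbar \<in> V \<and> (\<forall>x\<in>V \<inter> Om. G x \<inter> Ob \<noteq> {}))"
      have ybW: "(xbar, yb) \<in> W" using Wsub yb(1) by blast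
      obtain e where e: "e > 0" "ball (xbar, yb) e \<subseteq> W" using Wo ybW open_contains_ball by blast
      obtain e2 where e2: "e2 > 0" "ball yb e2 \<subseteq> Ob" using Ob yb(2) open_contains_ball by blast
      define r where "r = min (e / 3) (e2 / 2)"
      have r: "r > 0" using e e2 by (simp add: r_def)
      have inW: "(x, y) \<in> W" if "dist x xbar < r" "dist y yb \<le> r" for x y
      proof -
        have "dist (xbar, yb) (x, y) \<le> dist xbar x + dist yb y" by (rule dist_pair_le)
        also have "\<dots> < e" using that e(1) by (simp add: dist_commute r_def)
        finally show ?thesis using e(2) by auto
      qed
      have cbOb: "cball yb r \<subseteq> Ob" using e2 by (auto simp: r_def dist_commute intro!: subsetD[OF e2(2)])
      have "\<forall>k. \<exists>x. x \<in> ball xbar (min r (inverse (real (Suc k)))) \<inter> Om \<and> G x \<inter> Ob = {}"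
      proof
        fix k
        have "open (ball xbar (min r (inverse (real (Suc k)))))" by simp
        moreover have "xbar \<in> ball xbar (min r (inverse (real (Suc k))))" using r by simp
        ultimately show "\<exists>x. x \<in> ball xbar (min r (inverse (real (Suc k)))) \<inter> Om \<and> G x \<inter> Ob = {}"
          using neg by blast
      qed
      from choice[OF this] obtain xs where xs: "\<forall>k. xs k \<in> ball xbar (min r (inverse (real (Suc k)))) \<inter> Om \<and> G (xs k) \<inter> Ob = {}" by blast
      have xsOm: "xs k \<in> Om" for k using xs by blast
      have xsr: "dist (xs k) xbar < r" for k using xs by (auto simp: dist_commute)
      have xsk: "dist (xs k) xbar < inverse (real (Suc k))" for k using xs by (auto simp: dist_commute)
      have xsG: "y \<notin> G (xs k)" if "y \<in> cball yb r" for y k using xs cbOb that by blast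
      have xslim: "xs \<longlonglongrightarrow> xbar"
        unfolding lim_sequentially
      proof (intro allI impI)
        fix \<epsilon> :: real assume "\<epsilon> > 0"
        from reals_Archimedean[OF this] obtain N where N: "inverse (real (Suc N)) < \<epsilon>" by blast
        show "\<exists>N. \<forall>n\<ge>N. dist (xs n) xbar < \<epsilon>"
        proof (intro exI[of _ N] allI impI)
          fix n assume "N \<le> n"
          then have "inverse (real (Suc n)) \<le> inverse (real (Suc N))" by (simp add: le_imp_inverse_le)
          then show "dist (xs n) xbar < \<epsilon>" using xsk[of n] N by linarith
        qed
      qed
      have "\<forall>k. \<exists>ysmt. dist yb (fst ysmt) = r \<and> 0 < Fm l p (fx (xs k)) (fst ysmt) \<and> Fm l p (fx (xs k)) (fst ysmt) \<le> Fm l p (fx (xs k)) yb \<and> snd (snd ysmt) > 0 \<and>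
          (\<forall>c\<in>{1..l}. 0 \<le> fst (snd ysmt) c \<and> (fst (snd ysmt) c \<noteq> 0 \<longrightarrow> fx (xs k) c (fst ysmt) = Fm l p (fx (xs k)) (fst ysmt))) \<and>
          (\<Sum>c\<in>{1..p}. fst (snd ysmt) c *\<^sub>R gx (xs k) c (fst ysmt)) = - (snd (snd ysmt) *\<^sub>R (fst ysmt - yb))"
      proof
        fix k
        have "G (xs k) \<noteq> {}" using xsOm[of k] by (simp add: Om_def domG_def)
        then obtain w where w: "w \<in> G (xs k)" by blast
        have feas: "Fm l p (fx (xs k)) w = 0"
          using gamOm[OF xsOm[of k], of w] w Fm_nonneg[of l p "fx (xs k)" w] by simp
        have inf: "\<forall>y\<in>cball yb r. Fm l p (fx (xs k)) y > 0"
        proof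
          fix y assume "y \<in> cball yb r"
          then have "y \<notin> G (xs k)" by (rule xsG)
          then show "Fm l p (fx (xs k)) y > 0" using gamOm[OF xsOm[of k], of y] by simp
        qed
        have der: "\<forall>c\<in>{1..p}. \<forall>y\<in>cball yb r. (fx (xs k) c has_derivative (\<lambda>v. gx (xs k) c y \<bullet> v)) (at y)"
        proof (intro ballI)
          fix c y assume c: "c \<in> {1..p}" and y: "y \<in> cball yb r"
          have "dist y yb \<le> r" using y by (simp add: dist_commute)
          from Wder[OF inW[OF xsr this] c] show "(fx (xs k) c has_derivative (\<lambda>v. gx (xs k) c y \<bullet> v)) (at y)" .
        qed
        have cont: "\<forall>c\<in>{1..p}. continuous_on UNIV (fx (xs k) c)" using Omcont[OF xsOm[of k]] by blast
        from step[where f="fx (xs k)" and gr="gx (xs k)" and yb=yb and r=r and w=w and l=l and p=p,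
            OF r Omcv[OF xsOm[of k]] aff cont der feas inf]
        obtain y1 m1 t1 where "dist yb y1 = r \<and> 0 < Fm l p (fx (xs k)) y1 \<and> Fm l p (fx (xs k)) y1 \<le> Fm l p (fx (xs k)) yb \<and> t1 > 0 \<and>
          (\<forall>c\<in>{1..l}. 0 \<le> m1 c \<and> (m1 c \<noteq> 0 \<longrightarrow> fx (xs k) c y1 = Fm l p (fx (xs k)) y1)) \<and>
          (\<Sum>c\<in>{1..p}. m1 c *\<^sub>R gx (xs k) c y1) = - (t1 *\<^sub>R (y1 - yb))" by blast
        then show "\<exists>ysmt. dist yb (fst ysmt) = r \<and> 0 < Fm l p (fx (xs k)) (fst ysmt) \<and> Fm l p (fx (xs k)) (fst ysmt) \<le> Fm l p (fx (xs k)) yb \<and> snd (snd ysmt) > 0 \<and>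
          (\<forall>c\<in>{1..l}. 0 \<le> fst (snd ysmt) c \<and> (fst (snd ysmt) c \<noteq> 0 \<longrightarrow> fx (xs k) c (fst ysmt) = Fm l p (fx (xs k)) (fst ysmt))) \<and>
          (\<Sum>c\<in>{1..p}. fst (snd ysmt) c *\<^sub>R gx (xs k) c (fst ysmt)) = - (snd (snd ysmt) *\<^sub>R (fst ysmt - yb))"
          by (intro exI[of _ "(y1, m1, t1)"]) simp
      qed
      from choice[OF this] obtain ysmt where ysmt: "\<forall>k. dist yb (fst (ysmt k)) = r \<and> 0 < Fm l p (fx (xs k)) (fst (ysmt k)) \<and> Fm l p (fx (xs k)) (fst (ysmt k)) \<le> Fm l p (fx (xs k)) yb \<and> snd (snd (ysmt k)) > 0 \<and>
          (\<forall>c\<in>{1..l}. 0 \<le> fst (snd (ysmt k)) c \<and> (fst (snd (ysmt k)) c \<noteq> 0 \<longrightarrow> fx (xs k) c (fst (ysmt k)) = Fm l p (fx (xs k)) (fst (ysmt k)))) \<and>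
          (\<Sum>c\<in>{1..p}. fst (snd (ysmt k)) c *\<^sub>R gx (xs k) c (fst (ysmt k))) = - (snd (snd (ysmt k)) *\<^sub>R (fst (ysmt k) - yb))" by blast
      define ys where "ys k = fst (ysmt k)" for k
      define mu where "mu k = fst (snd (ysmt k))" for k
      define tau where "tau k = snd (snd (ysmt k))" for k
      have sph: "dist yb (ys k) = r" for k using ysmt by (simp add: ys_def)
      have mpos: "0 < Fm l p (fx (xs k)) (ys k)" for k using ysmt by (simp add: ys_def)
      have mle: "Fm l p (fx (xs k)) (ys k) \<le> Fm l p (fx (xs k)) yb" for k using ysmt by (simp add: ys_def)
      have taupos: "tau k > 0" for k using ysmt by (simp add: tau_def)
      have muI: "\<forall>c\<in>{1..l}. 0 \<le> mu k c \<and> (mu k c \<noteq> 0 \<longrightarrow> fx (xs k) c (ys k) = Fm l p (fx (xs k)) (ys k))" for k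
        using ysmt by (simp add: ys_def mu_def)
      have musum: "(\<Sum>c\<in>{1..p}. mu k c *\<^sub>R gx (xs k) c (ys k)) = - (tau k *\<^sub>R (ys k - yb))" for k
        using ysmt by (simp add: ys_def mu_def tau_def)
      define Fk where "Fk k = Fm l p (fx (xs k)) yb" for k
      have Fk0: "Fk \<longlonglongrightarrow> 0"
      proof -
        have lim_c: "(\<lambda>k. phiv l (fx (xs k)) c yb) \<longlonglongrightarrow> phiv l (fx xbar) c yb" if c: "c \<in> {1..p}" for c
        proof -
          have "(\<lambda>k. (xs k, yb)) \<longlonglongrightarrow> (xbar, yb)" by (intro tendsto_Pair xslim tendsto_const)
          from seq_cont[OF Wo Wcont[OF c] ybW this]
          have "(\<lambda>k. fx (xs k) c ((\<lambda>_. yb) k)) \<longlonglongrightarrow> fx xbar c yb" by simp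
          from phiv_tendsto[where f="\<lambda>k. fx (xs k)" and y="\<lambda>_. yb" and fz="fx xbar" and c=c and yz=yb and l=l, OF this]
          show ?thesis by simp
        qed
        have le0: "phiv l (fx xbar) c yb \<le> 0" if "c \<in> {1..p}" for c
          using gamW[OF ybW] yb(1) Fm_le_iff[of l p "fx xbar" yb 0] that by auto
        have "(\<lambda>k. \<Sum>c\<in>{1..p}. max 0 (phiv l (fx (xs k)) c yb)) \<longlonglongrightarrow> (\<Sum>c\<in>{1..p}. max 0 (phiv l (fx xbar) c yb))"
          by (intro tendsto_sum tendsto_max tendsto_const lim_c)
        moreover have "(\<Sum>c\<in>{1..p}. max 0 (phiv l (fx xbar) c yb)) = 0"
          using le0 by (intro sum.neutral) (simp add: max_absorb1)
        ultimately have up: "(\<lambda>k. \<Sum>c\<in>{1..p}. max 0 (phiv l (fx (xs k)) c yb)) \<longlonglongrightarrow> 0" by simp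
        have ev1: "eventually (\<lambda>k. 0 \<le> Fk k) sequentially"
          by (intro always_eventually allI) (simp add: Fk_def Fm_nonneg)
        have ev2: "eventually (\<lambda>k. Fk k \<le> (\<Sum>c\<in>{1..p}. max 0 (phiv l (fx (xs k)) c yb))) sequentially"
          unfolding Fk_def by (intro always_eventually allI Fm_bound)
        show ?thesis by (rule tendsto_sandwich[OF ev1 ev2 tendsto_const up])
      qed
      have ysc: "\<forall>k. ys k \<in> cball yb r" using sph by simp
      from seq_compactE[OF compact_imp_seq_compact[OF compact_cball] ysc]
      obtain y2 \<sigma>1 where y2: "y2 \<in> cball yb r" and s1: "strict_mono \<sigma>1" and ylim: "(ys \<circ> \<sigma>1) \<longlonglongrightarrow> y2" by blast
      define X where "X k = xs (\<sigma>1 k)" for k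
      define Y where "Y k = ys (\<sigma>1 k)" for k
      have Xlim: "X \<longlonglongrightarrow> xbar" unfolding X_def using LIMSEQ_subseq_LIMSEQ[OF xslim s1] by (simp add: o_def)
      have Ylim: "Y \<longlonglongrightarrow> y2" unfolding Y_def using ylim by (simp add: o_def)
      have XY: "(\<lambda>k. (X k, Y k)) \<longlonglongrightarrow> (xbar, y2)" by (intro tendsto_Pair Xlim Ylim)
      have y2W: "(xbar, y2) \<in> W" using inW[of xbar y2] r y2 by (simp add: dist_commute)
      have XW: "(X k, Y k) \<in> W" for k using inW[OF xsr, of "Y k"] sph by (simp add: X_def Y_def dist_commute)
      have XOm: "X k \<in> Om" for k by (simp add: X_def xsOm)
      have FkX: "(\<lambda>k. Fk (\<sigma>1 k)) \<longlonglongrightarrow> 0" using LIMSEQ_subseq_LIMSEQ[OF Fk0 s1] by (simp add: o_def)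
      have fXY: "(\<lambda>k. fx (X k) c (Y k)) \<longlonglongrightarrow> fx xbar c y2" if c: "c \<in> {1..p}" for c
        using seq_cont[OF Wo Wcont[OF c] y2W XY] by simp
      have mXY: "0 < Fm l p (fx (X k)) (Y k)" "Fm l p (fx (X k)) (Y k) \<le> Fk (\<sigma>1 k)" for k
        using mpos mle by (simp_all add: X_def Y_def Fk_def)
      have y2G: "y2 \<in> G xbar"
      proof -
        have "phiv l (fx xbar) c y2 \<le> 0" if c: "c \<in> {1..p}" for c
        proof (rule LIMSEQ_le[OF phiv_tendsto[where f="\<lambda>k. fx (X k)" and y=Y and fz="fx xbar" and c=c and yz=y2 and l=l, OF fXY[OF c]] FkX])
          show "\<exists>N. \<forall>n\<ge>N. phiv l (fx (X n)) c (Y n) \<le> Fk (\<sigma>1 n)"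
          proof (intro exI[of _ 0] allI impI)
            fix n :: nat
            show "phiv l (fx (X n)) c (Y n) \<le> Fk (\<sigma>1 n)"
              using Fm_ge[OF c, of l "fx (X n)" "Y n"] mXY(2)[of n] by linarith
          qed
        qed
        then have "Fm l p (fx xbar) y2 \<le> 0" by (subst Fm_le_iff) simp
        then show ?thesis using gamW[OF y2W] by simp
      qed
      have "RCPLD h l p Om xbar y2" using rcpld y2G by (simp add: G_def Om_def)
      then obtain U S where U: "open U" "(xbar, y2) \<in> U" and SJ: "S \<subseteq> Jcon l p"
        and Sind: "\<not> fam_lin_dep (\<lambda>i. grad_y (h i) xbar y2) S"
        and Sspan: "span ((\<lambda>i. grad_y (h i) xbar y2) ` S) = span ((\<lambda>i. grad_y (h i) xbar y2) ` Jcon l p)"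
        and crank: "\<forall>q1\<in>U \<inter> (Om \<times> UNIV). \<forall>q2\<in>U \<inter> (Om \<times> UNIV).
         fam_rank (\<lambda>i. grad_y (h i) (fst q1) (snd q1)) (Jcon l p) =
         fam_rank (\<lambda>i. grad_y (h i) (fst q2) (snd q2)) (Jcon l p)"
        and iii: "\<forall>K\<subseteq>active_set h l xbar y2.
         pos_lin_dep (\<lambda>i. grad_y (h i) xbar y2) K (\<lambda>i. grad_y (h i) xbar y2) S \<longrightarrow>
         (\<forall>(x, y)\<in>U \<inter> (Om \<times> UNIV). fam_lin_dep (\<lambda>i. grad_y (h i) x y) (K \<union> S))"
        unfolding RCPLD_def by blast
      define u where "u = (\<lambda>k i. grad_y (h i) (X k) (Y k))"
      define u0 where "u0 = (\<lambda>i. grad_y (h i) xbar y2)"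
      have Jfin: "finite (Jcon l p)" by (simp add: Jcon_def)
      have Sfin: "finite S" using SJ Jfin finite_subset by blast
      have Sp: "S \<subseteq> {l+1..p}" using SJ by (simp add: Jcon_def)
      have Sp1: "S \<subseteq> {1..p}" using Sp by auto
      have uconv: "(\<lambda>k. u k i) \<longlonglongrightarrow> u0 i" if "i \<in> {1..p}" for i
        using seq_cont[OF Wo Wgcont[OF that] y2W XY] by (simp add: u_def u0_def gx_def)
      have evU: "eventually (\<lambda>k. (X k, Y k) \<in> U) sequentially" using topological_tendstoD[OF XY U] .
      have evind: "eventually (\<lambda>k. \<not> fam_lin_dep (u k) S) sequentially"
      proof (rule ccontr)
        assume "\<not> eventually (\<lambda>k. \<not> fam_lin_dep (u k) S) sequentially"
        then have "frequently (\<lambda>k. fam_lin_dep (u k) S) sequentially" by (simp add: not_eventually)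
        from freq_subseq[OF this] obtain \<sigma> :: "nat \<Rightarrow> nat" where \<sigma>0: "strict_mono \<sigma> \<and> (\<forall>k. fam_lin_dep (u (\<sigma> k)) S)" ..
        note \<sigma> = conjunct1[OF \<sigma>0] conjunct2[OF \<sigma>0]
        have "\<forall>k. \<exists>cc. (\<exists>i\<in>S. cc i \<noteq> 0) \<and> (\<Sum>i\<in>S. cc i *\<^sub>R u (\<sigma> k) i) = 0"
          using \<sigma>(2) unfolding fam_lin_dep_def by blast
        from choice[OF this] obtain cc where
          cc: "\<forall>k. (\<exists>i\<in>S. cc k i \<noteq> 0) \<and> (\<Sum>i\<in>S. cc k i *\<^sub>R u (\<sigma> k) i) = 0" by blast
        have N: "\<forall>k. (\<Sum>i\<in>S. \<bar>cc k i\<bar>) > 0"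
        proof
          fix k
          from cc obtain i where i: "i \<in> S" "cc k i \<noteq> 0" by blast
          have "(\<Sum>j\<in>{i}. \<bar>cc k j\<bar>) \<le> (\<Sum>j\<in>S. \<bar>cc k j\<bar>)"
            by (rule sum_mono2) (use Sfin i in auto)
          then show "(\<Sum>i\<in>S. \<bar>cc k i\<bar>) > 0" using i by simp
        qed
        have small: "(\<lambda>k. norm (\<Sum>i\<in>S. cc k i *\<^sub>R u (\<sigma> k) i) / (\<Sum>i\<in>S. \<bar>cc k i\<bar>)) \<longlonglongrightarrow> 0"
          using cc by simp
        have uc: "\<forall>i\<in>S. (\<lambda>k. u (\<sigma> k) i) \<longlonglongrightarrow> u0 i"
        proof
          fix i assume "i \<in> S"
          then have "(\<lambda>k. u k i) \<longlonglongrightarrow> u0 i" using uconv Sp1 by blast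
          from LIMSEQ_subseq_LIMSEQ[OF this \<sigma>(1)] show "(\<lambda>k. u (\<sigma> k) i) \<longlonglongrightarrow> u0 i" by (simp add: o_def)
        qed
        from lim_dep[where u="\<lambda>k. u (\<sigma> k)" and c=cc, OF Sfin empty_subsetI uc N small]
        obtain c0 where c0: "(\<Sum>i\<in>S. \<bar>c0 i\<bar>) = 1" "(\<Sum>i\<in>S. c0 i *\<^sub>R u0 i) = 0" by blast
        have "\<exists>i\<in>S. c0 i \<noteq> 0"
        proof (rule ccontr)
          assume "\<not> (\<exists>i\<in>S. c0 i \<noteq> 0)"
          then have "(\<Sum>i\<in>S. \<bar>c0 i\<bar>) = 0" by simp
          then show False using c0(1) by simp
        qed
        then have "fam_lin_dep u0 S" unfolding fam_lin_dep_def using c0(2) by blast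
        then show False using Sind by (simp add: u0_def)
      qed
      have rank0: "fam_rank u0 (Jcon l p) = card S"
        using rank_basis[OF Sfin Sind Sspan] by (simp add: u0_def)
      have evspan: "eventually (\<lambda>k. span (u k ` Jcon l p) = span (u k ` S)) sequentially"
      proof -
        have "eventually (\<lambda>k. (X k, Y k) \<in> U \<and> \<not> fam_lin_dep (u k) S) sequentially"
          by (rule eventually_conj[OF evU evind])
        then show ?thesis
        proof (rule eventually_mono)
          fix k assume k: "(X k, Y k) \<in> U \<and> \<not> fam_lin_dep (u k) S"
          have q1: "(X k, Y k) \<in> U \<inter> (Om \<times> UNIV)" using k XOm by auto
          have q2: "(xbar, y2) \<in> U \<inter> (Om \<times> UNIV)" using U xbarOm by auto
          have "fam_rank (u k) (Jcon l p) = fam_rank u0 (Jcon l p)"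
            using bspec[OF bspec[OF crank q1] q2] by (simp add: u_def u0_def)
          then have "fam_rank (u k) (Jcon l p) = card S" using rank0 by simp
          from span_eq_rank[OF Jfin SJ conjunct2[OF k] this]
          show "span (u k ` Jcon l p) = span (u k ` S)" .
        qed
      qed
      obtain k0 where k0: "\<forall>k\<ge>k0. (X k, Y k) \<in> U \<and> \<not> fam_lin_dep (u k) S \<and> span (u k ` Jcon l p) = span (u k ` S)"
        using eventually_conj[OF evU eventually_conj[OF evind evspan]] unfolding eventually_sequentially by blast
      have Xeq: "X k = xs (\<sigma>1 k)" "Y k = ys (\<sigma>1 k)" for k by (simp_all add: X_def Y_def)
      have ugx: "u k i = gx (X k) i (Y k)" for k i by (simp add: u_def gx_def)
      have PS0: "{1..l} \<inter> S = {}" using Sp by auto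
      have carK: "\<exists>K c. K \<subseteq> {1..l} \<and> (\<forall>i\<in>K. fx (X k) i (Y k) = Fm l p (fx (X k)) (Y k)) \<and> (\<forall>i\<in>K. c i \<ge> 0) \<and>
          (\<Sum>i\<in>K\<union>S. c i *\<^sub>R u k i) = - (tau (\<sigma>1 k) *\<^sub>R (Y k - yb)) \<and> \<not> fam_lin_dep (u k) (K \<union> S)"
        if k: "k \<ge> k0" for k
      proof -
        define mk where "mk = mu (\<sigma>1 k)"
        define P where "P = {i\<in>{1..l}. mk i \<noteq> 0}"
        have Pfin: "finite P" by (simp add: P_def)
        have PS: "P \<inter> S = {}" using PS0 by (auto simp: P_def)
        have Ppos: "\<forall>i\<in>P. mk i \<ge> 0" using muI[of "\<sigma>1 k"] by (auto simp: P_def mk_def)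
        have Pact: "\<forall>i\<in>P. fx (X k) i (Y k) = Fm l p (fx (X k)) (Y k)"
          using muI[of "\<sigma>1 k"] by (auto simp: P_def mk_def Xeq)
        have indk: "\<not> fam_lin_dep (u k) S" using k0 k by blast
        have spk: "span (u k ` Jcon l p) = span (u k ` S)" using k0 k by blast
        define z where "z = (\<Sum>j\<in>Jcon l p. mk j *\<^sub>R u k j)"
        have "z \<in> span (u k ` Jcon l p)"
          unfolding z_def by (intro span_sum span_scale span_base) auto
        then have zspan: "z \<in> span (u k ` S)" using spk by simp
        have un: "{1..p} = {1..l} \<union> Jcon l p" using lp by (auto simp: Jcon_def)
        have "(\<Sum>c\<in>{1..p}. mk c *\<^sub>R u k c) = (\<Sum>c\<in>{1..l}. mk c *\<^sub>R u k c) + z"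
          unfolding un z_def by (rule sum.union_disjoint) (auto simp: Jcon_def)
        also have "(\<Sum>c\<in>{1..l}. mk c *\<^sub>R u k c) = (\<Sum>i\<in>P. mk i *\<^sub>R u k i)"
          by (rule sum.mono_neutral_right) (auto simp: P_def)
        finally have split: "(\<Sum>c\<in>{1..p}. mk c *\<^sub>R u k c) = (\<Sum>i\<in>P. mk i *\<^sub>R u k i) + z" .
        have eq: "(\<Sum>c\<in>{1..p}. mk c *\<^sub>R u k c) = - (tau (\<sigma>1 k) *\<^sub>R (Y k - yb))"
          using musum[of "\<sigma>1 k"] by (simp add: ugx Xeq mk_def)
        from carath[OF Pfin Sfin PS indk Ppos zspan] obtain K c where
          Kc: "K \<subseteq> P" "\<forall>i\<in>K. c i \<ge> 0" "(\<Sum>i\<in>P. mk i *\<^sub>R u k i) + z = (\<Sum>i\<in>K\<union>S. c i *\<^sub>R u k i)"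
            "\<not> fam_lin_dep (u k) (K \<union> S)" by blast
        have "K \<subseteq> {1..l}" using Kc(1) by (auto simp: P_def)
        moreover have "\<forall>i\<in>K. fx (X k) i (Y k) = Fm l p (fx (X k)) (Y k)" using Kc(1) Pact by blast
        moreover have "(\<Sum>i\<in>K\<union>S. c i *\<^sub>R u k i) = - (tau (\<sigma>1 k) *\<^sub>R (Y k - yb))"
          using Kc(3) split eq by simp
        ultimately show ?thesis using Kc(2,4) by (intro exI[of _ K] exI[of _ c]) simp
      qed
      have "\<forall>k. \<exists>Kc. k \<ge> k0 \<longrightarrow> (fst Kc \<subseteq> {1..l} \<and> (\<forall>i\<in>fst Kc. fx (X k) i (Y k) = Fm l p (fx (X k)) (Y k)) \<and> (\<forall>i\<in>fst Kc. snd Kc i \<ge> 0) \<and>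
          (\<Sum>i\<in>fst Kc\<union>S. snd Kc i *\<^sub>R u k i) = - (tau (\<sigma>1 k) *\<^sub>R (Y k - yb)) \<and> \<not> fam_lin_dep (u k) (fst Kc \<union> S))"
      proof
        fix k
        show "\<exists>Kc. k \<ge> k0 \<longrightarrow> (fst Kc \<subseteq> {1..l} \<and> (\<forall>i\<in>fst Kc. fx (X k) i (Y k) = Fm l p (fx (X k)) (Y k)) \<and> (\<forall>i\<in>fst Kc. snd Kc i \<ge> 0) \<and>
          (\<Sum>i\<in>fst Kc\<union>S. snd Kc i *\<^sub>R u k i) = - (tau (\<sigma>1 k) *\<^sub>R (Y k - yb)) \<and> \<not> fam_lin_dep (u k) (fst Kc \<union> S))"
        proof (cases "k \<ge> k0")
          case True
          from carK[OF True] obtain K c where "K \<subseteq> {1..l} \<and> (\<forall>i\<in>K. fx (X k) i (Y k) = Fm l p (fx (X k)) (Y k)) \<and> (\<forall>i\<in>K. c i \<ge> 0) \<and>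
            (\<Sum>i\<in>K\<union>S. c i *\<^sub>R u k i) = - (tau (\<sigma>1 k) *\<^sub>R (Y k - yb)) \<and> \<not> fam_lin_dep (u k) (K \<union> S)" by blast
          then show ?thesis by (intro exI[of _ "(K, c)"]) simp
        qed simp
      qed
      from choice[OF this] obtain Kc where Kc: "\<forall>k. k \<ge> k0 \<longrightarrow> (fst (Kc k) \<subseteq> {1..l} \<and> (\<forall>i\<in>fst (Kc k). fx (X k) i (Y k) = Fm l p (fx (X k)) (Y k)) \<and> (\<forall>i\<in>fst (Kc k). snd (Kc k) i \<ge> 0) \<and>
          (\<Sum>i\<in>fst (Kc k)\<union>S. snd (Kc k) i *\<^sub>R u k i) = - (tau (\<sigma>1 k) *\<^sub>R (Y k - yb)) \<and> \<not> fam_lin_dep (u k) (fst (Kc k) \<union> S))" by blast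
      define Kf where "Kf k = fst (Kc k)" for k
      define cf where "cf k = snd (Kc k)" for k
      have KfI: "Kf k \<subseteq> {1..l}" and Kfact: "\<forall>i\<in>Kf k. fx (X k) i (Y k) = Fm l p (fx (X k)) (Y k)"
        and cfpos: "\<forall>i\<in>Kf k. cf k i \<ge> 0"
        and cfeq: "(\<Sum>i\<in>Kf k\<union>S. cf k i *\<^sub>R u k i) = - (tau (\<sigma>1 k) *\<^sub>R (Y k - yb))"
        and cfind: "\<not> fam_lin_dep (u k) (Kf k \<union> S)" if "k \<ge> k0" for k
        using Kc that unfolding Kf_def cf_def by blast+
      define N where "N k = (\<Sum>i\<in>Kf k\<union>S. \<bar>cf k i\<bar>)" for k
      have KSfin: "finite (Kf k \<union> S)" if "k \<ge> k0" for k
        using KfI[OF that] Sfin finite_subset by blast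
      have dY: "norm (Y k - yb) = r" for k using sph[of "\<sigma>1 k"] by (simp add: Xeq dist_norm norm_minus_commute)
      have Npos: "N k > 0" if k: "k \<ge> k0" for k
      proof (rule ccontr)
        assume "\<not> N k > 0"
        moreover have "N k \<ge> 0" by (simp add: N_def sum_nonneg)
        ultimately have "N k = 0" by simp
        then have "\<forall>i\<in>Kf k\<union>S. \<bar>cf k i\<bar> = 0" unfolding N_def using KSfin[OF k]
          by (subst (asm) sum_nonneg_eq_0_iff) auto
        then have "(\<Sum>i\<in>Kf k\<union>S. cf k i *\<^sub>R u k i) = 0" by simp
        then have "tau (\<sigma>1 k) *\<^sub>R (Y k - yb) = 0" using cfeq[OF k] by simp
        then have "Y k - yb = 0" using taupos[of "\<sigma>1 k"] by simp
        then show False using dY[of k] r by simp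
      qed
      have ratio: "norm (\<Sum>i\<in>Kf k\<union>S. cf k i *\<^sub>R u k i) / N k \<le> 2 * Fk (\<sigma>1 k) / r" if k: "k \<ge> k0" for k
      proof -
        have der: "\<forall>c\<in>{1..p}. (fx (X k) c has_derivative (\<lambda>v. gx (X k) c (Y k) \<bullet> v)) (at (Y k))"
          using Wder[OF XW] by blast
        have eqg: "(\<Sum>i\<in>Kf k\<union>S. cf k i *\<^sub>R gx (X k) i (Y k)) = - (tau (\<sigma>1 k) *\<^sub>R (Y k - yb))"
          using cfeq[OF k] by (simp add: ugx)
        have mleX: "Fm l p (fx (X k)) (Y k) \<le> Fm l p (fx (X k)) yb" using mle[of "\<sigma>1 k"] by (simp add: Xeq)
        from estimate[where f="fx (X k)" and gr="gx (X k)" and ys="Y k" and yb=yb and l=l and p=p, OF Omcv[OF XOm[of k]] aff der KfI[OF k] Sp lp Kfact[OF k] cfpos[OF k] mleX eqg]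
        have est: "tau (\<sigma>1 k) * r\<^sup>2 \<le> 2 * Fk (\<sigma>1 k) * N k" using dY[of k] by (simp add: N_def Fk_def Xeq)
        have "norm (\<Sum>i\<in>Kf k\<union>S. cf k i *\<^sub>R u k i) = tau (\<sigma>1 k) * r"
          using cfeq[OF k] taupos[of "\<sigma>1 k"] dY[of k] by simp
        moreover have "tau (\<sigma>1 k) * r / N k \<le> 2 * Fk (\<sigma>1 k) / r"
        proof -
          have "tau (\<sigma>1 k) * r * r \<le> 2 * Fk (\<sigma>1 k) * N k" using est by (simp add: power2_eq_square mult.assoc)
          then show ?thesis using Npos[OF k] r by (simp add: divide_le_eq le_divide_eq mult.commute mult.left_commute)
        qed
        ultimately show ?thesis by simp
      qed
      define Kg where "Kg k = Kf (k + k0)" for k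
      have "range Kg \<subseteq> Pow {1..l}"
      proof
        fix A assume "A \<in> range Kg"
        then obtain k where "A = Kf (k + k0)" by (auto simp: Kg_def)
        moreover have "Kf (k + k0) \<subseteq> {1..l}" by (rule KfI) simp
        ultimately show "A \<in> Pow {1..l}" by simp
      qed
      then have "finite (range Kg)" by (rule finite_subset) simp
      from inf_img_fin_dom[OF this infinite_UNIV_nat] obtain K where K: "infinite (Kg -` {K})" by blast
      have "Kg -` {K} = {k. Kg k = K}" by auto
      then have "frequently (\<lambda>k. Kg k = K) sequentially"
        using K by (simp add: frequently_cofinite[symmetric] cofinite_eq_sequentially)
      from freq_subseq[OF this] obtain \<sigma>2 :: "nat \<Rightarrow> nat" where \<sigma>20: "strict_mono \<sigma>2 \<and> (\<forall>k. Kg (\<sigma>2 k) = K)" ..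
      define \<rho> where "\<rho> k = \<sigma>2 k + k0" for k
      have \<rho>k0: "\<rho> k \<ge> k0" for k by (simp add: \<rho>_def)
      have \<rho>mono: "strict_mono \<rho>" using conjunct1[OF \<sigma>20] by (simp add: strict_mono_def \<rho>_def)
      have K\<rho>: "Kf (\<rho> k) = K" for k using conjunct2[OF \<sigma>20] by (simp add: Kg_def \<rho>_def)
      have Kl: "K \<subseteq> {1..l}" using KfI[OF \<rho>k0[of 0]] K\<rho>[of 0] by simp
      have KS: "K \<inter> S = {}" using Kl PS0 by blast
      have KSfin': "finite (K \<union> S)" using Kl Sfin finite_subset by blast
      have KSp: "K \<union> S \<subseteq> {1..p}" using Kl Sp1 lp by auto
      have uc: "\<forall>i\<in>K \<union> S. (\<lambda>k. u (\<rho> k) i) \<longlonglongrightarrow> u0 i"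
      proof
        fix i assume "i \<in> K \<union> S"
        then have "(\<lambda>k. u k i) \<longlonglongrightarrow> u0 i" using uconv KSp by blast
        from LIMSEQ_subseq_LIMSEQ[OF this \<rho>mono] show "(\<lambda>k. u (\<rho> k) i) \<longlonglongrightarrow> u0 i" by (simp add: o_def)
      qed
      have NK: "\<forall>k. (\<Sum>i\<in>K \<union> S. \<bar>cf (\<rho> k) i\<bar>) > 0" using Npos[OF \<rho>k0] K\<rho> by (simp add: N_def)
      have Fr: "(\<lambda>k. Fk (\<sigma>1 (\<rho> k))) \<longlonglongrightarrow> 0" using LIMSEQ_subseq_LIMSEQ[OF FkX \<rho>mono] by (simp add: o_def)
      have smallK: "(\<lambda>k. norm (\<Sum>i\<in>K \<union> S. cf (\<rho> k) i *\<^sub>R u (\<rho> k) i) / (\<Sum>i\<in>K \<union> S. \<bar>cf (\<rho> k) i\<bar>)) \<longlonglongrightarrow> 0"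
      proof (rule tendsto_sandwich[OF _ _ tendsto_const])
        show "eventually (\<lambda>k. 0 \<le> norm (\<Sum>i\<in>K \<union> S. cf (\<rho> k) i *\<^sub>R u (\<rho> k) i) / (\<Sum>i\<in>K \<union> S. \<bar>cf (\<rho> k) i\<bar>)) sequentially"
          by (intro always_eventually allI divide_nonneg_nonneg norm_ge_zero sum_nonneg) simp
        show "eventually (\<lambda>k. norm (\<Sum>i\<in>K \<union> S. cf (\<rho> k) i *\<^sub>R u (\<rho> k) i) / (\<Sum>i\<in>K \<union> S. \<bar>cf (\<rho> k) i\<bar>) \<le> 2 * Fk (\<sigma>1 (\<rho> k)) / r) sequentially"
          using ratio[OF \<rho>k0] K\<rho> by (intro always_eventually allI) (simp add: N_def)
        show "(\<lambda>k. 2 * Fk (\<sigma>1 (\<rho> k)) / r) \<longlonglongrightarrow> 0"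
          using tendsto_divide[OF tendsto_mult[OF tendsto_const Fr] tendsto_const, of r] r by simp
      qed
      have posK: "\<forall>k. \<forall>i\<in>K. cf (\<rho> k) i \<ge> 0" using cfpos[OF \<rho>k0] K\<rho> by simp
      from lim_dep[where u="\<lambda>k. u (\<rho> k)" and c="\<lambda>k. cf (\<rho> k)", OF KSfin' _ uc NK smallK posK]
      obtain c0 where c0: "(\<Sum>i\<in>K \<union> S. \<bar>c0 i\<bar>) = 1" "\<forall>i\<in>K. c0 i \<ge> 0" "(\<Sum>i\<in>K \<union> S. c0 i *\<^sub>R u0 i) = 0"
        by blast
      have nz: "\<exists>i\<in>K \<union> S. c0 i \<noteq> 0"
      proof (rule ccontr)
        assume "\<not> (\<exists>i\<in>K \<union> S. c0 i \<noteq> 0)"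
        then have "(\<Sum>i\<in>K \<union> S. \<bar>c0 i\<bar>) = 0" by simp
        then show False using c0(1) by simp
      qed
      have "(\<Sum>i\<in>K \<union> S. c0 i *\<^sub>R u0 i) = (\<Sum>i\<in>K. c0 i *\<^sub>R u0 i) + (\<Sum>i\<in>S. c0 i *\<^sub>R u0 i)"
        by (rule sum.union_disjoint) (use KSfin' KS in auto)
      then have pld: "pos_lin_dep u0 K u0 S"
        unfolding pos_lin_dep_def using c0(2,3) nz by (intro exI[of _ c0]) auto
      have Kact0: "K \<subseteq> active_set h l xbar y2"
      proof
        fix i assume i: "i \<in> K"
        then have il: "i \<in> {1..l}" using Kl by blast
        then have ip: "i \<in> {1..p}" using lp by auto
        have e1: "(\<lambda>k. fx (X (\<rho> k)) i (Y (\<rho> k))) \<longlonglongrightarrow> fx xbar i y2"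
          using LIMSEQ_subseq_LIMSEQ[OF fXY[OF ip] \<rho>mono] by (simp add: o_def)
        have eqF: "fx (X (\<rho> k)) i (Y (\<rho> k)) = Fm l p (fx (X (\<rho> k))) (Y (\<rho> k))" for k
          using Kfact[OF \<rho>k0[of k]] K\<rho>[of k] i by simp
        have e2: "(\<lambda>k. fx (X (\<rho> k)) i (Y (\<rho> k))) \<longlonglongrightarrow> 0"
        proof (rule tendsto_sandwich[OF _ _ tendsto_const Fr])
          show "eventually (\<lambda>k. 0 \<le> fx (X (\<rho> k)) i (Y (\<rho> k))) sequentially"
            using mXY(1) eqF by (intro always_eventually allI) (simp add: less_imp_le)
          show "eventually (\<lambda>k. fx (X (\<rho> k)) i (Y (\<rho> k)) \<le> Fk (\<sigma>1 (\<rho> k))) sequentially"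
            using mXY(2) eqF by (intro always_eventually allI) simp
        qed
        have "fx xbar i y2 = 0" using LIMSEQ_unique[OF e1 e2] .
        moreover have "\<bar>h i xbar y2\<bar> \<noteq> \<infinity>" using Wfin[OF y2W ip] .
        ultimately have "h i xbar y2 = 0"
          by (cases "h i xbar y2") (simp_all add: fx_def zero_ereal_def)
        then show "i \<in> active_set h l xbar y2" using il by (simp add: active_set_def Icon_def)
      qed
      have q: "(X (\<rho> 0), Y (\<rho> 0)) \<in> U \<inter> (Om \<times> UNIV)" using k0 \<rho>k0[of 0] XOm by blast
      have "fam_lin_dep (\<lambda>i. grad_y (h i) (X (\<rho> 0)) (Y (\<rho> 0))) (K \<union> S)"
        using iii Kact0 pld q unfolding u0_def by blast
      then have "fam_lin_dep (u (\<rho> 0)) (Kf (\<rho> 0) \<union> S)" using K\<rho>[of 0] by (simp add: u_def)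
      then show False using cfind[OF \<rho>k0[of 0]] by simp
    qed
  qed
qed


end
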